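(* Let $H$ be a connected, non-bipartite constraint graph on nodes $\{1,\dots,q\}$, let $r\ge1$, and fix a root $x$ of $\mathbb{T}^r$. Then every simple semi-invariant Gibbs measure $\mu$ on $\hom(\mathbb{T}^r,H)$ (for some activity vector) is obtained as follows: there are positive node-weights $w$ on $2H$ such that $\mu$ is the law of $|\psi|$, where $\psi$ is the random element of $\hom(\mathbb{T}^r,2H)$ produced by the $r$-branching $w$-random walk on $2H$ with the root spin $\psi(x)$ drawn from the stationary distribution of that walk restricted to the positive nodes $\{1,\dots,q\}$ and renormalized.
   Context: A constraint graph is a finite graph with loops allowed and no multiple edges; $N(i)$ is the set of nodes adjacent to $i$. The bipartite double $2H$ has nodes $\{\pm1,\dots,\pm q\}$, with $i\sim j$ in $2H$ iff $i,j$ have opposite signs and $|i|\sim|j|$ in $H$ (a loop at $i$ in $H$ becomes the edge $\{i,-i\}$). For $\psi\in\hom(\mathbb{T}^r,2H)$, $|\psi|(v)=|\psi(v)|$ defines an element of $\hom(\mathbb{T}^r,H)$. $\mathbb{T}^r$ is the infinite connected cycle-free graph with all degrees $r+1$; a site is even or odd according to the parity of its distance from $x$. A measure on $\hom(\mathbb{T}^r,H)$ is semi-invariant if $\mu(S\circ\kappa)=\mu(S)$ for every measurable $S$ and every automorphism $\kappa$ of $\mathbb{T}^r$ preserving parity, where $S\circ\kappa=\{\varphi\circ\kappa:\varphi\in S\}$. Activity vectors, Gibbs measures: for positive $\lambda$, a probability measure on $\hom(\mathbb{T}^r,H)$ is Gibbs for $\lambda$ if for every finite set $U$ of sites its conditional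 law on $U$ given the configuration off $U$ is a.s. the conditional law, given the values on $\partial U$ (the sites outside $U$ adjacent to $U$), under the measure on $\hom(U\cup\partial U,H)$ with weights $\prod_v\lambda_{\varphi(v)}$. A Gibbs measure on a tree is simple if, for every site $u$ and spin $i$, the restrictions of $\varphi$ to the components of $\mathbb{T}^r\setminus\{u\}$ are mutually independent given $\varphi(u)=i$. The $r$-branching $w$-random walk on a graph $K$ with positive node weights $w$: with $z_i=\sum_{j\in N(i)}w_j$, each child of a site with spin $i$ receives spin $j\in N(i)$ with probability $w_j/z_i$, independently given the parent's spin; its stationary distribution is $\pi_i\propto w_iz_i$. *)

theory Defs
  imports "HOL-Probability.Probability"
begin

text \<open>A constraint graph H on nodes 1..q is given by a symmetric relation E
(loops allowed) whose edges only join nodes in 1..q.\<close>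

definition constraint_graph :: "nat \<Rightarrow> (nat \<Rightarrow> nat \<Rightarrow> bool) \<Rightarrow> bool" where
  "constraint_graph q E \<longleftrightarrow>
     (\<forall>i j. E i j \<longrightarrow> E j i) \<and> (\<forall>i j. E i j \<longrightarrow> i \<in> {1..q} \<and> j \<in> {1..q})"

definition graph_connected :: "nat \<Rightarrow> (nat \<Rightarrow> nat \<Rightarrow> bool) \<Rightarrow> bool" where
  "graph_connected q E \<longleftrightarrow> (\<forall>i\<in>{1..q}. \<forall>j\<in>{1..q}. E\<^sup>*\<^sup>* i j)"

definition graph_bipartite :: "nat \<Rightarrow> (nat \<Rightarrow> nat \<Rightarrow> bool) \<Rightarrow> bool" where
  "graph_bipartite q E \<longleftrightarrow>
     (\<exists>c :: nat \<Rightarrow> bool. \<forall>i\<in>{1..q}. \<forall>j\<in>{1..q}. E i j \<longrightarrow> c i \<noteq> c j)"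

text \<open>Bipartite double 2H: nodes are the nonzero integers -q..q.\<close>

definition double_nodes :: "nat \<Rightarrow> int set" where
  "double_nodes q = {i. i \<noteq> 0 \<and> \<bar>i\<bar> \<le> int q}"

definition double_adj :: "nat \<Rightarrow> (nat \<Rightarrow> nat \<Rightarrow> bool) \<Rightarrow> int \<Rightarrow> int \<Rightarrow> bool" where
  "double_adj q E i j \<longleftrightarrow>
     i \<in> double_nodes q \<and> j \<in> double_nodes q \<and> i * j < 0 \<and> E (nat \<bar>i\<bar>) (nat \<bar>j\<bar>)"

text \<open>Sites of T^r are lists: the empty list, whose r+1 neighbours are the lists [a]
with a \<le> r; every other site v has the children v @ [a] with a < r and parent butlast v.\<close>

definition tree_verts :: "nat \<Rightarrow> nat list set" where
  "tree_verts r = {v. v = [] \<or> (hd v \<le> r \<and> (\<forall>a\<in>set (tl v). a < r))}"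

definition tree_adj :: "nat \<Rightarrow> nat list \<Rightarrow> nat list \<Rightarrow> bool" where
  "tree_adj r u v \<longleftrightarrow> u \<in> tree_verts r \<and> v \<in> tree_verts r \<and>
     ((v \<noteq> [] \<and> u = butlast v) \<or> (u \<noteq> [] \<and> v = butlast u))"

fun lcp :: "nat list \<Rightarrow> nat list \<Rightarrow> nat list" where
  "lcp (a # as) (b # bs) = (if a = b then a # lcp as bs else [])"
| "lcp _ _ = []"

definition tdist :: "nat list \<Rightarrow> nat list \<Rightarrow> nat" where
  "tdist u v = length u + length v - 2 * length (lcp u v)"

definition tparent :: "nat \<Rightarrow> nat list \<Rightarrow> nat list \<Rightarrow> nat list" where
  "tparent r x v = (THE u. tree_adj r u v \<and> tdist x u < tdist x v)"

definition ball :: "nat \<Rightarrow> nat list \<Rightarrow> nat \<Rightarrow> nat list set" where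
  "ball r x n = {v \<in> tree_verts r. tdist x v \<le> n}"

definition cfgM :: "nat \<Rightarrow> (nat list \<Rightarrow> nat) measure" where
  "cfgM r = PiM (tree_verts r) (\<lambda>_. count_space UNIV)"

definition cfgM2 :: "nat \<Rightarrow> (nat list \<Rightarrow> int) measure" where
  "cfgM2 r = PiM (tree_verts r) (\<lambda>_. count_space UNIV)"

definition hom_on :: "nat \<Rightarrow> nat \<Rightarrow> (nat \<Rightarrow> nat \<Rightarrow> bool) \<Rightarrow> nat list set \<Rightarrow> (nat list \<Rightarrow> nat) \<Rightarrow> bool" where
  "hom_on r q E A \<phi> \<longleftrightarrow> (\<forall>v\<in>A. \<phi> v \<in> {1..q}) \<and> (\<forall>u\<in>A. \<forall>v\<in>A. tree_adj r u v \<longrightarrow> E (\<phi> u) (\<phi> v))"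

definition is_hom :: "nat \<Rightarrow> nat \<Rightarrow> (nat \<Rightarrow> nat \<Rightarrow> bool) \<Rightarrow> (nat list \<Rightarrow> nat) \<Rightarrow> bool" where
  "is_hom r q E \<phi> \<longleftrightarrow> hom_on r q E (tree_verts r) \<phi>"

definition boundary :: "nat \<Rightarrow> nat list set \<Rightarrow> nat list set" where
  "boundary r U = {v \<in> tree_verts r - U. \<exists>u\<in>U. tree_adj r u v}"

definition spec_weight :: "nat \<Rightarrow> nat \<Rightarrow> (nat \<Rightarrow> nat \<Rightarrow> bool) \<Rightarrow> (nat \<Rightarrow> real) \<Rightarrow> nat list set
     \<Rightarrow> (nat list \<Rightarrow> nat) \<Rightarrow> (nat list \<Rightarrow> nat) \<Rightarrow> real" where
  "spec_weight r q E lam U \<eta> \<phi> =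
     (if hom_on r q E (U \<union> boundary r U) (\<lambda>v. if v \<in> U then \<eta> v else \<phi> v)
      then (\<Prod>v\<in>U. lam (\<eta> v)) else 0)"

definition spec_kernel :: "nat \<Rightarrow> nat \<Rightarrow> (nat \<Rightarrow> nat \<Rightarrow> bool) \<Rightarrow> (nat \<Rightarrow> real) \<Rightarrow> nat list set
     \<Rightarrow> (nat list \<Rightarrow> nat) \<Rightarrow> (nat list \<Rightarrow> nat) \<Rightarrow> real" where
  "spec_kernel r q E lam U \<eta> \<phi> =
     spec_weight r q E lam U \<eta> \<phi> / (\<Sum>\<eta>'\<in>(U \<rightarrow>\<^sub>E {1..q}). spec_weight r q E lam U \<eta>' \<phi>)"

definition gibbs :: "nat \<Rightarrow> nat \<Rightarrow> (nat \<Rightarrow> nat \<Rightarrow> bool) \<Rightarrow> (nat \<Rightarrow> real) \<Rightarrow> (nat list \<Rightarrow> nat) measure \<Rightarrow> bool" where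
  "gibbs r q E lam \<mu> \<longleftrightarrow>
     prob_space \<mu> \<and> sets \<mu> = sets (cfgM r) \<and> (AE \<phi> in \<mu>. is_hom r q E \<phi>) \<and>
     (\<forall>U \<eta> B. finite U \<longrightarrow> U \<subseteq> tree_verts r \<longrightarrow> B \<in> sets \<mu> \<longrightarrow>
        (\<forall>\<phi>\<in>space \<mu>. \<forall>\<psi>\<in>space \<mu>. (\<forall>v\<in>tree_verts r - U. \<phi> v = \<psi> v) \<longrightarrow> (\<phi> \<in> B \<longleftrightarrow> \<psi> \<in> B)) \<longrightarrow>
        measure \<mu> ({\<phi> \<in> space \<mu>. \<forall>v\<in>U. \<phi> v = \<eta> v} \<inter> B)
          = (\<integral>\<phi>. indicator B \<phi> * spec_kernel r q E lam U \<eta> \<phi> \<partial>\<mu>))"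

text \<open>Component of T^r minus u containing the neighbour n of u.\<close>
definition tcomp :: "nat \<Rightarrow> nat list \<Rightarrow> nat list \<Rightarrow> nat list set" where
  "tcomp r u n = {v \<in> tree_verts r. tdist n v < tdist u v}"

definition simple_gibbs :: "nat \<Rightarrow> (nat list \<Rightarrow> nat) measure \<Rightarrow> bool" where
  "simple_gibbs r \<mu> \<longleftrightarrow>
     (\<forall>u\<in>tree_verts r. \<forall>i::nat. measure \<mu> {\<phi> \<in> space \<mu>. \<phi> u = i} > 0 \<longrightarrow>
        prob_space.indep_vars (uniform_measure \<mu> {\<phi> \<in> space \<mu>. \<phi> u = i})
          (\<lambda>n. PiM (tcomp r u n) (\<lambda>_. count_space (UNIV :: nat set)))
          (\<lambda>n \<phi>. restrict \<phi> (tcomp r u n))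
          {n. tree_adj r u n})"

definition parity_aut :: "nat \<Rightarrow> nat list \<Rightarrow> (nat list \<Rightarrow> nat list) \<Rightarrow> bool" where
  "parity_aut r x \<kappa> \<longleftrightarrow> bij_betw \<kappa> (tree_verts r) (tree_verts r) \<and>
     (\<forall>u\<in>tree_verts r. \<forall>v\<in>tree_verts r. tree_adj r u v \<longleftrightarrow> tree_adj r (\<kappa> u) (\<kappa> v)) \<and>
     (\<forall>v\<in>tree_verts r. even (tdist x v) \<longleftrightarrow> even (tdist x (\<kappa> v)))"

definition compose_set :: "nat \<Rightarrow> (nat list \<Rightarrow> nat) set \<Rightarrow> (nat list \<Rightarrow> nat list) \<Rightarrow> (nat list \<Rightarrow> nat) set" where
  "compose_set r S \<kappa> = (\<lambda>\<phi>. restrict (\<phi> \<circ> \<kappa>) (tree_verts r)) ` S"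

definition semi_invariant :: "nat \<Rightarrow> nat list \<Rightarrow> (nat list \<Rightarrow> nat) measure \<Rightarrow> bool" where
  "semi_invariant r x \<mu> \<longleftrightarrow>
     (\<forall>\<kappa> S. parity_aut r x \<kappa> \<longrightarrow> S \<in> sets \<mu> \<longrightarrow> emeasure \<mu> (compose_set r S \<kappa>) = emeasure \<mu> S)"

definition zsum :: "nat \<Rightarrow> (nat \<Rightarrow> nat \<Rightarrow> bool) \<Rightarrow> (int \<Rightarrow> real) \<Rightarrow> int \<Rightarrow> real" where
  "zsum q E w i = (\<Sum>j\<in>{j \<in> double_nodes q. double_adj q E i j}. w j)"

text \<open>Stationary distribution pi_i \<propto> w_i z_i restricted to positive nodes and renormalized.\<close>
definition root_dist :: "nat \<Rightarrow> (nat \<Rightarrow> nat \<Rightarrow> bool) \<Rightarrow> (int \<Rightarrow> real) \<Rightarrow> int \<Rightarrow> real" where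
  "root_dist q E w i =
     (if i \<in> {1..int q} then w i * zsum q E w i / (\<Sum>j\<in>{1..int q}. w j * zsum q E w j) else 0)"

definition brw_prob :: "nat \<Rightarrow> nat \<Rightarrow> (nat \<Rightarrow> nat \<Rightarrow> bool) \<Rightarrow> (int \<Rightarrow> real) \<Rightarrow> nat list \<Rightarrow> nat
     \<Rightarrow> (nat list \<Rightarrow> int) \<Rightarrow> real" where
  "brw_prob r q E w x n \<zeta> =
     root_dist q E w (\<zeta> x) *
     (\<Prod>v\<in>ball r x n - {x}.
        (if double_adj q E (\<zeta> (tparent r x v)) (\<zeta> v)
         then w (\<zeta> v) / zsum q E w (\<zeta> (tparent r x v)) else 0))"

definition is_brw_law :: "nat \<Rightarrow> nat \<Rightarrow> (nat \<Rightarrow> nat \<Rightarrow> bool) \<Rightarrow> (int \<Rightarrow> real) \<Rightarrow> nat list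
     \<Rightarrow> (nat list \<Rightarrow> int) measure \<Rightarrow> bool" where
  "is_brw_law r q E w x \<nu> \<longleftrightarrow>
     prob_space \<nu> \<and> sets \<nu> = sets (cfgM2 r) \<and>
     (\<forall>n \<zeta>. measure \<nu> {\<psi> \<in> space \<nu>. \<forall>v\<in>ball r x n. \<psi> v = \<zeta> v} = brw_prob r q E w x n \<zeta>)"

definition abs_cfg :: "nat \<Rightarrow> (nat list \<Rightarrow> int) \<Rightarrow> (nat list \<Rightarrow> nat)" where
  "abs_cfg r \<psi> = (\<lambda>v\<in>tree_verts r. nat \<bar>\<psi> v\<bar>)"

end

theory Submission
  imports Defs
begin

lemma lcp_char: "k \<le> length (lcp u v) \<longleftrightarrow> k \<le> length u \<and> k \<le> length v \<and> take k u = take k v"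
proof (induction u v arbitrary: k rule: lcp.induct)
  case (1 a as b bs)
  show ?case
  proof (cases k)
    case 0 then show ?thesis by simp
  next
    case (Suc k') then show ?thesis using 1[of k'] by auto
  qed
qed (auto simp: le_Suc_eq)

lemma lcp_le1: "length (lcp u v) \<le> length u" and lcp_le2: "length (lcp u v) \<le> length v"
  using lcp_char[of "length (lcp u v)" u v] by auto

lemma lcp_take: "take (length (lcp u v)) u = take (length (lcp u v)) v"
  using lcp_char[of "length (lcp u v)" u v] by auto

lemma lcp_sym: "lcp u v = lcp v u"
  by (induction u v rule: lcp.induct) auto

lemma lcp_self: "length (lcp u u) = length u"
  by (induction u) auto

lemma tdist_eq: "tdist u v + 2 * length (lcp u v) = length u + length v"
  unfolding tdist_def using lcp_le1[of u v] lcp_le2[of u v] by simp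

lemma tdist_sym: "tdist u v = tdist v u"
  unfolding tdist_def using lcp_sym[of u v] by (simp add: add.commute)

lemma tdist_self[simp]: "tdist u u = 0"
  unfolding tdist_def using lcp_self by simp

lemma tdist_0: "tdist u v = 0 \<Longrightarrow> u = v"
proof -
  assume "tdist u v = 0"
  then have e: "2 * length (lcp u v) = length u + length v" using tdist_eq[of u v] by simp
  then have "length (lcp u v) = length u" "length (lcp u v) = length v"
    using lcp_le1[of u v] lcp_le2[of u v] by auto
  then show "u = v" using lcp_take[of u v] by simp
qed

lemma tdist_0_iff[simp]: "tdist u v = 0 \<longleftrightarrow> u = v"
  using tdist_0 by auto

lemma lcp_min: "min (length (lcp u v)) (length (lcp v w)) \<le> length (lcp u w)"
proof -
  let ?k = "min (length (lcp u v)) (length (lcp v w))"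
  have a: "?k \<le> length (lcp u v)" "?k \<le> length (lcp v w)" by auto
  then have "take ?k u = take ?k v" "take ?k v = take ?k w" "?k \<le> length u" "?k \<le> length w"
    using lcp_char by blast+
  then show ?thesis using lcp_char by auto
qed

lemma tdist_triangle: "tdist u w \<le> tdist u v + tdist v w"
proof -
  have "length (lcp u v) + length (lcp v w) \<le> length v + length (lcp u w)"
    using lcp_min[of u v w] lcp_le2[of u v] lcp_le1[of v w] by linarith
  then show ?thesis using tdist_eq[of u w] tdist_eq[of u v] tdist_eq[of v w] by linarith
qed

lemma tdist_parity: "even (tdist u v + length u + length v)"
proof -
  have "tdist u v + length u + length v = 2 * (length u + length v - length (lcp u v))"
    using tdist_eq[of u v] by linarith
  then show ?thesis by simp
qed

lemma tdist_ge: "length v \<le> length u + tdist u v"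
  using tdist_eq[of u v] lcp_le1[of u v] by linarith

lemma tdist_snoc: "tdist u (u @ [a]) = 1"
proof -
  have "length (lcp u (u @ [a])) = length u"
    using lcp_char[of "length u" u "u @ [a]"] lcp_le1[of u "u@[a]"] by auto
  then show ?thesis using tdist_eq[of u "u @ [a]"] by simp
qed

lemma tree_adj_sym: "tree_adj r u v \<longleftrightarrow> tree_adj r v u"
  unfolding tree_adj_def by auto

lemma tree_adj_cases: "tree_adj r u v \<Longrightarrow> (\<exists>a. v = u @ [a]) \<or> (u \<noteq> [] \<and> v = butlast u)"
  unfolding tree_adj_def by (metis append_butlast_last_id)

lemma tree_adj_tdist: "tree_adj r u v \<Longrightarrow> tdist u v = 1"
  using tree_adj_cases[of r u v] tdist_snoc tdist_sym
  by (metis append_butlast_last_id)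

lemma tree_adj_verts: "tree_adj r u v \<Longrightarrow> u \<in> tree_verts r \<and> v \<in> tree_verts r"
  unfolding tree_adj_def by auto

lemma tree_adj_neq: "tree_adj r u v \<Longrightarrow> u \<noteq> v"
  using tree_adj_tdist by fastforce

lemma adj_dist: assumes "tree_adj r u v"
  shows "tdist u w = tdist v w + 1 \<or> tdist v w = tdist u w + 1"
proof -
  have 1: "tdist u v = 1" using tree_adj_tdist[OF assms] .
  have "tdist u w \<le> 1 + tdist v w" using tdist_triangle[of u w v] 1 by simp
  moreover have "tdist v w \<le> 1 + tdist u w" using tdist_triangle[of v w u] 1 tdist_sym[of u v] by simp
  moreover have "odd (tdist u w + tdist v w)"
  proof -
    have e1: "even (tdist u w + length u + length w)" and e2: "even (tdist v w + length v + length w)"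
      and e3: "even (tdist u v + length u + length v)" using tdist_parity by blast+
    have eq: "(tdist u w + length u + length w) + (tdist v w + length v + length w)
       = (tdist u w + tdist v w) + (length u + length v) + 2 * length w" by linarith
    have "even ((tdist u w + length u + length w) + (tdist v w + length v + length w))"
      using e1 e2 by simp
    then have "even ((tdist u w + tdist v w) + (length u + length v) + 2 * length w)"
      by (simp only: eq)
    moreover have "odd (length u + length v)" using e3 1 by simp
    ultimately show ?thesis by simp
  qed
  ultimately show ?thesis by presburger
qed

lemma verts_take: "w \<in> tree_verts r \<Longrightarrow> take k w \<in> tree_verts r"
proof -
  assume w: "w \<in> tree_verts r"
  show ?thesis
  proof (cases "k = 0 \<or> w = []")
    case True then show ?thesis unfolding tree_verts_def by auto
  next
    case False
    then obtain k' a w' where k: "k = Suc k'" and ww: "w = a # w'" by (metis list.exhaust not0_implies_Suc)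
    have "set (take k' w') \<subseteq> set w'" by (rule set_take_subset)
    then show ?thesis using w unfolding tree_verts_def k ww by auto
  qed
qed

lemma verts_butlast: "w \<in> tree_verts r \<Longrightarrow> butlast w \<in> tree_verts r"
  by (metis butlast_conv_take verts_take)

lemma verts_snoc0: "r \<ge> 1 \<Longrightarrow> u \<in> tree_verts r \<Longrightarrow> u @ [0] \<in> tree_verts r"
  unfolding tree_verts_def by (cases u) auto

lemma tdist_step_exists:
  assumes u: "u \<in> tree_verts r" and w: "w \<in> tree_verts r" and ne: "u \<noteq> w"
  shows "\<exists>n. tree_adj r u n \<and> tdist n w < tdist u w"
proof (cases "take (length u) w = u")
  case True
  then have lu: "length u < length w"
    using ne by (metis linorder_not_le take_all_iff)
  define n where "n = take (Suc (length u)) w"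
  have nv: "n \<in> tree_verts r" using verts_take[OF w] n_def by simp
  have nb: "n = u @ [w ! length u]" using True lu n_def by (simp add: take_Suc_conv_app_nth)
  have adj: "tree_adj r u n" unfolding tree_adj_def using u nv nb by auto
  have L1: "length (lcp u w) = length u"
    using lcp_char[of "length u" u w] lcp_le1[of u w] True lu by auto
  have L2: "length (lcp n w) = length n"
    using lcp_char[of "length n" n w] lcp_le1[of n w] n_def lu by auto
  have "tdist n w < tdist u w" using tdist_eq[of n w] tdist_eq[of u w] L1 L2 nb by simp
  then show ?thesis using adj by blast
next
  case False
  then have une: "u \<noteq> []" by auto
  define n where "n = butlast u"
  have nv: "n \<in> tree_verts r" using verts_butlast[OF u] n_def by simp
  have adj: "tree_adj r u n" unfolding tree_adj_def using u nv une n_def by auto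
  have Lu: "length (lcp u w) < length u"
  proof (rule ccontr)
    assume "\<not> ?thesis"
    then have "length (lcp u w) = length u" using lcp_le1[of u w] by simp
    then show False using lcp_take[of u w] False by simp
  qed
  have "length (lcp u w) \<le> length (lcp n w)"
  proof -
    let ?k = "length (lcp u w)"
    have "?k \<le> length n" using Lu n_def une by simp
    moreover have "take ?k n = take ?k u" using Lu n_def by (simp add: take_butlast)
    ultimately show ?thesis using lcp_char[of ?k u w] lcp_char[of ?k n w] by auto
  qed
  moreover have "length u > 0" using une by simp
  moreover have "length n = length u - 1" using n_def by simp
  ultimately have "tdist n w < tdist u w" using tdist_eq[of n w] tdist_eq[of u w] by linarith
  then show ?thesis using adj by blast
qed

lemma child_closer: assumes "tdist (u @ [a]) w < tdist u w"
  shows "take (Suc (length u)) w = u @ [a]"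
proof -
  let ?L = "length (lcp u w)" and ?L' = "length (lcp (u@[a]) w)"
  have 1: "?L' \<ge> Suc ?L" using assms tdist_eq[of u w] tdist_eq[of "u@[a]" w] by simp
  have 2: "?L' \<le> Suc (length u)" using lcp_le1[of "u@[a]" w] by simp
  show ?thesis
  proof (cases "?L' = Suc (length u)")
    case True
    then show ?thesis using lcp_take[of "u@[a]" w] by simp
  next
    case False
    then have "?L' \<le> length u" using 2 by simp
    moreover have "take ?L' (u@[a]) = take ?L' w" using lcp_take .
    ultimately have "take ?L' u = take ?L' w" by simp
    moreover have "?L' \<le> length w" using lcp_le2 .
    ultimately have "?L' \<le> ?L" using lcp_char[of ?L' u w] \<open>?L' \<le> length u\<close> by auto
    then show ?thesis using 1 by simp
  qed
qed

lemma parent_closer: assumes "u \<noteq> []" "tdist (butlast u) w < tdist u w"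
  shows "take (length u) w \<noteq> u"
proof
  assume t: "take (length u) w = u"
  then have lu: "length u \<le> length w" by (metis length_take min.absorb_iff2 min.commute)
  have L1: "length (lcp u w) = length u"
    using lcp_char[of "length u" u w] lcp_le1[of u w] t lu by auto
  have "length (lcp (butlast u) w) \<le> length (butlast u)" using lcp_le1 .
  then show False using assms tdist_eq[of u w] tdist_eq[of "butlast u" w] L1 by simp
qed

lemma tdist_step_unique:
  assumes a1: "tree_adj r u n1" and a2: "tree_adj r u n2"
    and d1: "tdist n1 w < tdist u w" and d2: "tdist n2 w < tdist u w"
  shows "n1 = n2"
proof -
  have c1: "(\<exists>a. n1 = u @ [a]) \<or> (u \<noteq> [] \<and> n1 = butlast u)" using tree_adj_cases[OF a1] .
  have c2: "(\<exists>a. n2 = u @ [a]) \<or> (u \<noteq> [] \<and> n2 = butlast u)" using tree_adj_cases[OF a2] .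
  show ?thesis
  proof (cases "\<exists>a. n1 = u @ [a]")
    case True
    then obtain a where a: "n1 = u @ [a]" by blast
    have t1: "take (Suc (length u)) w = u @ [a]" using child_closer d1 a by simp
    then have tu: "take (length u) w = u"
      by (metis butlast_snoc butlast_take diff_Suc_1 length_append_singleton length_take
          min.absorb_iff2 min.commute take_take lessI less_imp_le_nat)
    show ?thesis
    proof (cases "\<exists>b. n2 = u @ [b]")
      case True
      then obtain b where b: "n2 = u @ [b]" by blast
      have "take (Suc (length u)) w = u @ [b]" using child_closer d2 b by simp
      then show ?thesis using a b t1 by simp
    next
      case False
      then have "u \<noteq> [] \<and> n2 = butlast u" using c2 by blast
      then show ?thesis using parent_closer d2 tu by blast
    qed
  next
    case False
    then have p1: "u \<noteq> [] \<and> n1 = butlast u" using c1 by blast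
    show ?thesis
    proof (cases "\<exists>b. n2 = u @ [b]")
      case True
      then obtain b where b: "n2 = u @ [b]" by blast
      have t1: "take (Suc (length u)) w = u @ [b]" using child_closer d2 b by simp
      then have tu: "take (length u) w = u"
        by (metis butlast_snoc butlast_take diff_Suc_1 length_append_singleton length_take
          min.absorb_iff2 min.commute take_take lessI less_imp_le_nat)
      then show ?thesis using parent_closer d1 p1 by blast
    next
      case False
      then show ?thesis using c2 p1 by blast
    qed
  qed
qed


lemma tdist_adj_parent:
  assumes "tree_adj r u v" shows "tdist x u + 1 = tdist x v \<or> tdist x v + 1 = tdist x u"
  using adj_dist[OF assms, of x] tdist_sym by metis

lemma tparent_props:
  assumes x: "x \<in> tree_verts r" and v: "v \<in> tree_verts r" and ne: "v \<noteq> x"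
  shows "tree_adj r (tparent r x v) v \<and> tdist x (tparent r x v) + 1 = tdist x v"
proof -
  obtain n where n: "tree_adj r v n" "tdist n x < tdist v x"
    using tdist_step_exists[OF v x ne] by blast
  have P: "tree_adj r n v \<and> tdist x n < tdist x v" using n tree_adj_sym tdist_sym by metis
  have "tparent r x v = n"
    unfolding tparent_def
  proof (rule the_equality)
    show "tree_adj r n v \<and> tdist x n < tdist x v" by (rule P)
  next
    fix u assume u: "tree_adj r u v \<and> tdist x u < tdist x v"
    then have "tree_adj r v u" "tdist u x < tdist v x" using tree_adj_sym tdist_sym by metis+
    then show "u = n" using tdist_step_unique n by blast
  qed
  then show ?thesis using P tdist_adj_parent[of r n v x] by auto
qed

lemma comp_nbr:
  assumes w: "w \<in> tcomp r u c" and wc: "w \<noteq> c" and wp: "tree_adj r w p" and uc: "tree_adj r u c"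
  shows "p \<in> tcomp r u c"
proof (rule ccontr)
  assume np: "p \<notin> tcomp r u c"
  have pv: "p \<in> tree_verts r" using tree_adj_verts[OF wp] by simp
  have wv: "w \<in> tree_verts r" using w unfolding tcomp_def by simp
  have cv: "c \<in> tree_verts r" using tree_adj_verts[OF uc] by simp
  have wlt: "tdist c w < tdist u w" using w unfolding tcomp_def by simp
  have plt: "\<not> tdist c p < tdist u p" using np pv unfolding tcomp_def by simp
  have a1: "tdist u w = tdist c w + 1 \<or> tdist c w = tdist u w + 1" using adj_dist[OF uc] .
  have a2: "tdist u p = tdist c p + 1 \<or> tdist c p = tdist u p + 1" using adj_dist[OF uc] .
  have a3: "tdist w u = tdist p u + 1 \<or> tdist p u = tdist w u + 1" using adj_dist[OF wp] .
  have a4: "tdist w c = tdist p c + 1 \<or> tdist p c = tdist w c + 1" using adj_dist[OF wp] .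
  have s1: "tdist w u = tdist u w" "tdist p u = tdist u p" "tdist w c = tdist c w" "tdist p c = tdist c p"
    using tdist_sym by metis+
  have e1: "tdist u p + 1 = tdist u w" and e2: "tdist c p = tdist u w"
    using a1 a2 a3 a4 s1 wlt plt by linarith+
  obtain p' where p': "tree_adj r w p'" "tdist p' c < tdist w c"
    using tdist_step_exists[OF wv cv wc] by blast
  have a5: "tdist w c = tdist p' c + 1 \<or> tdist p' c = tdist w c + 1" using adj_dist[OF p'(1)] .
  have "tdist u p' \<le> tdist u c + tdist c p'" by (rule tdist_triangle)
  moreover have "tdist u c = 1" using tree_adj_tdist[OF uc] .
  moreover have "tdist c p' = tdist p' c" using tdist_sym by metis
  ultimately have "tdist p' u < tdist w u" using a5 a1 wlt s1 p'(2) tdist_sym[of p' u] by linarith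
  moreover have "tdist p u < tdist w u" using e1 s1 by linarith
  ultimately have "p = p'" using tdist_step_unique[OF wp p'(1)] by blast
  then have "tdist p c < tdist w c" using p'(2) by simp
  then show False using e2 s1 a1 wlt by linarith
qed

lemma comp_closed:
  assumes x: "x \<in> tree_verts r" and W: "W \<subseteq> tree_verts r" and xW: "x \<in> W"
    and pc: "\<forall>v\<in>W. v \<noteq> x \<longrightarrow> tparent r x v \<in> W"
    and cW: "c \<notin> W" and uc: "tree_adj r u c" and d: "tdist x c = tdist x u + 1"
  shows "W \<inter> tcomp r u c = {}"
proof -
  have "\<forall>w. tdist x w = k \<longrightarrow> w \<in> W \<longrightarrow> w \<notin> tcomp r u c" for k
  proof (induction k rule: less_induct)
    case (less k)
    show ?case
    proof (intro allI impI)
      fix w assume wk: "tdist x w = k" and wW: "w \<in> W"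
      show "w \<notin> tcomp r u c"
      proof
        assume wc: "w \<in> tcomp r u c"
        have "w \<noteq> c" using cW wW by auto
        have "w \<noteq> x"
        proof
          assume "w = x"
          then have "tdist c x < tdist u x" using wc unfolding tcomp_def by simp
          then show False using d tdist_sym by (metis add_lessD1 less_not_refl)
        qed
        have wv: "w \<in> tree_verts r" using W wW by auto
        have pp: "tree_adj r (tparent r x w) w \<and> tdist x (tparent r x w) + 1 = tdist x w"
          using tparent_props[OF x wv \<open>w \<noteq> x\<close>] .
        have "tparent r x w \<in> tcomp r u c"
          using comp_nbr[OF wc \<open>w \<noteq> c\<close> _ uc] pp tree_adj_sym by metis
        moreover have "tparent r x w \<in> W" using pc wW \<open>w \<noteq> x\<close> by auto
        ultimately show False using less.IH[of "tdist x (tparent r x w)"] pp wk by auto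
      qed
    qed
  qed
  then show ?thesis by blast
qed

lemma in_some_comp:
  assumes "u \<in> tree_verts r" "w \<in> tree_verts r" "w \<noteq> u"
  shows "\<exists>n. tree_adj r u n \<and> w \<in> tcomp r u n"
  using tdist_step_exists[OF assms(1,2)] assms(2,3) unfolding tcomp_def by auto

lemma self_in_comp: "tree_adj r u n \<Longrightarrow> n \<in> tcomp r u n"
  unfolding tcomp_def using tree_adj_verts tree_adj_tdist by fastforce

lemma comp_nbr_eq:
  assumes "tree_adj r u n" "tree_adj r u n'" "n' \<in> tcomp r u n" shows "n' = n"
proof -
  have "tdist n n' < 1" using assms(3) tree_adj_tdist[OF assms(2)] unfolding tcomp_def by simp
  then show ?thesis by simp
qed

lemma adj_len_parity: "tree_adj r u v \<Longrightarrow> odd (length u + length v)"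
  using tdist_parity[of u v] tree_adj_tdist by fastforce

lemma nbrs_not_adj:
  assumes "tree_adj r u n" "tree_adj r u n'" shows "\<not> tree_adj r n n'"
proof
  assume a: "tree_adj r n n'"
  have "odd (length u + length n)" "odd (length u + length n')" "odd (length n + length n')"
    using adj_len_parity assms a by blast+
  then show False by simp
qed

lemma adj_nonloop: "\<not> tree_adj r u u"
  using tree_adj_neq by blast

lemma nbr_cases: "tree_adj r u n \<Longrightarrow> n = butlast u \<or> (\<exists>a\<le>r. n = u @ [a])"
proof -
  assume a: "tree_adj r u n"
  show ?thesis
  proof (cases "\<exists>a. n = u @ [a]")
    case True
    then obtain a where na: "n = u @ [a]" by blast
    have "n \<in> tree_verts r" using tree_adj_verts[OF a] by simp
    then have "a \<le> r" using na unfolding tree_verts_def by (cases u) auto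
    then show ?thesis using na by blast
  next
    case False then show ?thesis using tree_adj_cases[OF a] by blast
  qed
qed

lemma nbrs_finite: "finite {n. tree_adj r u n}"
proof (rule finite_subset)
  show "{n. tree_adj r u n} \<subseteq> insert (butlast u) ((\<lambda>a. u @ [a]) ` {..r})"
    using nbr_cases by fastforce
qed auto

lemma nbr_snoc0: "r \<ge> 1 \<Longrightarrow> u \<in> tree_verts r \<Longrightarrow> tree_adj r u (u @ [0])"
  unfolding tree_adj_def using verts_snoc0 by auto

lemma nbrs_nonempty: "r \<ge> 1 \<Longrightarrow> u \<in> tree_verts r \<Longrightarrow> {n. tree_adj r u n} \<noteq> {}"
  using nbr_snoc0 by blast

lemma verts_set: "v \<in> tree_verts r \<Longrightarrow> set v \<subseteq> {..r}"
  unfolding tree_verts_def by (cases v) auto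

lemma ball_finite: "finite (ball r x n)"
proof (rule finite_subset)
  show "ball r x n \<subseteq> {v. set v \<subseteq> {..r} \<and> length v \<le> length x + n}"
  proof
    fix v assume "v \<in> ball r x n"
    then have "v \<in> tree_verts r" "tdist x v \<le> n" unfolding ball_def by auto
    then show "v \<in> {v. set v \<subseteq> {..r} \<and> length v \<le> length x + n}"
      using verts_set[of v r] tdist_ge[of v x] by auto
  qed
  show "finite {v. set v \<subseteq> {..r} \<and> length v \<le> length x + n}"
    by (rule finite_lists_length_le) simp
qed

lemma ball_x: "x \<in> tree_verts r \<Longrightarrow> x \<in> ball r x n"
  unfolding ball_def by simp

lemma ball_parent: "x \<in> tree_verts r \<Longrightarrow> v \<in> ball r x n \<Longrightarrow> v \<noteq> x \<Longrightarrow> tparent r x v \<in> ball r x n"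
  unfolding ball_def using tparent_props tree_adj_verts by fastforce

lemma tdist_x_parity: "even (tdist x v) \<longleftrightarrow> even (length x + length v)"
  using tdist_parity[of x v] by presburger

lemma nil_vert[simp]: "[] \<in> tree_verts r"
  unfolding tree_verts_def by simp

lemma zero_vert[simp]: "[0] \<in> tree_verts r"
  unfolding tree_verts_def by simp

fun rho :: "nat list \<Rightarrow> nat list" where
  "rho [] = [0]"
| "rho [0] = []"
| "rho (0 # b # rest) = Suc b # rest"
| "rho (Suc a # rest) = 0 # a # rest"

fun tau :: "nat \<Rightarrow> nat list \<Rightarrow> nat list" where
  "tau a [] = []"
| "tau a (h # t) = (if h = 0 then a else if h = a then 0 else h) # t"

definition aut :: "nat \<Rightarrow> (nat list \<Rightarrow> nat list) \<Rightarrow> bool" where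
  "aut r \<kappa> \<longleftrightarrow> bij_betw \<kappa> (tree_verts r) (tree_verts r) \<and>
     (\<forall>u\<in>tree_verts r. \<forall>v\<in>tree_verts r. tree_adj r u v \<longleftrightarrow> tree_adj r (\<kappa> u) (\<kappa> v))"

definition adj0 :: "nat list \<Rightarrow> nat list \<Rightarrow> bool" where
  "adj0 u v \<longleftrightarrow> (v \<noteq> [] \<and> u = butlast v) \<or> (u \<noteq> [] \<and> v = butlast u)"

lemma tree_adj_adj0: "tree_adj r u v \<longleftrightarrow> u \<in> tree_verts r \<and> v \<in> tree_verts r \<and> adj0 u v"
  unfolding tree_adj_def adj0_def by auto

lemma adj0_sym: "adj0 u v \<longleftrightarrow> adj0 v u"
  unfolding adj0_def by auto

lemma adj0_snoc: "adj0 u v \<longleftrightarrow> (\<exists>a. v = u @ [a]) \<or> (\<exists>a. u = v @ [a])"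
  unfolding adj0_def by (metis append_butlast_last_id butlast_snoc snoc_eq_iff_butlast)

lemma rho_rho[simp]: "rho (rho v) = v"
  by (induction v rule: rho.induct) auto

lemma tau_tau[simp]: "tau a (tau a v) = v"
  by (cases v) auto

lemma rho_len: "odd (length (rho v) + length v)"
  by (induction v rule: rho.induct) auto

lemma tau_len[simp]: "length (tau a v) = length v"
  by (cases v) auto

lemma rho_snoc: "adj0 (rho u) (rho (u @ [a]))"
proof (cases u rule: rho.cases)
  case 1 then show ?thesis by (cases a) (auto simp: adj0_def)
next
  case 2 then show ?thesis by (auto simp: adj0_def)
next
  case (3 b rest) then show ?thesis by (auto simp: adj0_def)
next
  case (4 c rest) then show ?thesis by (auto simp: adj0_def)
qed

lemma tau_snoc: "adj0 (tau b u) (tau b (u @ [a]))"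
  by (cases u) (auto simp: adj0_def)

lemma rho_adj0: "adj0 u v \<Longrightarrow> adj0 (rho u) (rho v)"
  using rho_snoc adj0_snoc adj0_sym by metis

lemma tau_adj0: "adj0 u v \<Longrightarrow> adj0 (tau b u) (tau b v)"
  using tau_snoc adj0_snoc adj0_sym by metis

lemma rho_verts: "v \<in> tree_verts r \<Longrightarrow> rho v \<in> tree_verts r"
  by (induction v rule: rho.induct) (auto simp: tree_verts_def)

lemma tau_verts: "b \<le> r \<Longrightarrow> v \<in> tree_verts r \<Longrightarrow> tau b v \<in> tree_verts r"
  by (cases v) (auto simp: tree_verts_def)

lemma aut_rho: "aut r rho"
  unfolding aut_def
proof
  show "bij_betw rho (tree_verts r) (tree_verts r)"
    by (rule bij_betwI[where g=rho]) (auto simp: rho_verts)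
  show "\<forall>u\<in>tree_verts r. \<forall>v\<in>tree_verts r. tree_adj r u v = tree_adj r (rho u) (rho v)"
    unfolding tree_adj_adj0 using rho_verts rho_adj0 by (metis rho_rho)
qed

lemma aut_tau: "b \<le> r \<Longrightarrow> aut r (tau b)"
  unfolding aut_def
proof
  assume b: "b \<le> r"
  show "bij_betw (tau b) (tree_verts r) (tree_verts r)"
    by (rule bij_betwI[where g="tau b"]) (auto simp: tau_verts b)
  show "\<forall>u\<in>tree_verts r. \<forall>v\<in>tree_verts r. tree_adj r u v = tree_adj r (tau b u) (tau b v)"
    unfolding tree_adj_adj0 using tau_verts[OF b] tau_adj0 by (metis tau_tau)
qed

lemma aut_id: "aut r (\<lambda>v. v)"
  unfolding aut_def by (auto simp: bij_betw_def)

lemma aut_comp: "aut r k1 \<Longrightarrow> aut r k2 \<Longrightarrow> aut r (k1 \<circ> k2)"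
  unfolding aut_def
proof (intro conjI)
  assume a: "bij_betw k1 (tree_verts r) (tree_verts r) \<and> (\<forall>u\<in>tree_verts r. \<forall>v\<in>tree_verts r. tree_adj r u v = tree_adj r (k1 u) (k1 v))"
    "bij_betw k2 (tree_verts r) (tree_verts r) \<and> (\<forall>u\<in>tree_verts r. \<forall>v\<in>tree_verts r. tree_adj r u v = tree_adj r (k2 u) (k2 v))"
  show "bij_betw (k1 \<circ> k2) (tree_verts r) (tree_verts r)" using a bij_betw_trans by blast
  have m: "k2 u \<in> tree_verts r" if "u \<in> tree_verts r" for u using a that bij_betwE by blast
  show "\<forall>u\<in>tree_verts r. \<forall>v\<in>tree_verts r. tree_adj r u v = tree_adj r ((k1 \<circ> k2) u) ((k1 \<circ> k2) v)"
  proof (intro ballI)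
    fix u v assume uv: "u \<in> tree_verts r" "v \<in> tree_verts r"
    have "tree_adj r u v = tree_adj r (k2 u) (k2 v)" using a uv by blast
    also have "\<dots> = tree_adj r (k1 (k2 u)) (k1 (k2 v))" using a m uv by blast
    finally show "tree_adj r u v = tree_adj r ((k1 \<circ> k2) u) ((k1 \<circ> k2) v)" by simp
  qed
qed

lemma aut_maps: "aut r k \<Longrightarrow> v \<in> tree_verts r \<Longrightarrow> k v \<in> tree_verts r"
  unfolding aut_def using bij_betwE by blast

lemma aut_nbr_pre:
  assumes k: "aut r k" and u: "u \<in> tree_verts r" and adj: "tree_adj r (k u) c"
  shows "\<exists>w. tree_adj r u w \<and> k w = c"
proof -
  have "c \<in> tree_verts r" using tree_adj_verts[OF adj] by simp
  then obtain w where w: "w \<in> tree_verts r" "k w = c"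
    using k unfolding aut_def bij_betw_def by (metis imageE)
  then have "tree_adj r u w" using k u adj unfolding aut_def by blast
  then show ?thesis using w by blast
qed

lemma nil_nbr: "tree_adj r [] w \<Longrightarrow> \<exists>c\<le>r. w = [c]"
  using nbr_cases[of r "[]" w] adj_nonloop by fastforce

lemma aut_exists:
  assumes "u \<in> tree_verts r"
  shows "\<exists>k. aut r k \<and> k [] = u \<and> (\<forall>v. even (length (k v) + length v) \<longleftrightarrow> even (length u))"
  using assms
proof (induction u rule: rev_induct)
  case Nil
  show ?case by (rule exI[of _ "\<lambda>v. v"]) (simp add: aut_id)
next
  case (snoc a v)
  have vv: "v \<in> tree_verts r" using verts_butlast[OF snoc.prems] by simp
  obtain k where k: "aut r k" "k [] = v" "\<forall>w. even (length (k w) + length w) \<longleftrightarrow> even (length v)"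
    using snoc.IH[OF vv] by blast
  have "tree_adj r v (v @ [a])" unfolding tree_adj_def using vv snoc.prems by simp
  then obtain w where w: "tree_adj r [] w" "k w = v @ [a]"
    using aut_nbr_pre[OF k(1) nil_vert] k(2) by metis
  obtain c where c: "c \<le> r" "w = [c]" using nil_nbr[OF w(1)] by blast
  define k' where "k' = k \<circ> tau c \<circ> rho"
  have "aut r k'" unfolding k'_def using aut_comp aut_tau[OF c(1)] aut_rho k(1) by metis
  moreover have "k' [] = v @ [a]" unfolding k'_def using w c by simp
  moreover have "even (length (k' z) + length z) \<longleftrightarrow> even (length (v @ [a]))" for z
  proof -
    have "even (length (k (tau c (rho z))) + length (tau c (rho z))) \<longleftrightarrow> even (length v)"
      using k(3) by blast
    moreover have "odd (length (rho z) + length z)" by (rule rho_len)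
    ultimately show ?thesis unfolding k'_def by auto
  qed
  ultimately show ?case by blast
qed

lemma aut_edge:
  assumes u: "u \<in> tree_verts r" and ev: "even (length u)" and uc: "tree_adj r u c"
  shows "\<exists>k. aut r k \<and> k [] = u \<and> k [0] = c \<and> (\<forall>v. even (length (k v) + length v))"
proof -
  obtain k where k: "aut r k" "k [] = u" "\<forall>v. even (length (k v) + length v) \<longleftrightarrow> even (length u)"
    using aut_exists[OF u] by blast
  obtain w where w: "tree_adj r [] w" "k w = c" using aut_nbr_pre[OF k(1) nil_vert] k(2) uc by metis
  obtain a where a: "a \<le> r" "w = [a]" using nil_nbr[OF w(1)] by blast
  define k' where "k' = k \<circ> tau a"
  have "aut r k'" unfolding k'_def using aut_comp aut_tau[OF a(1)] k(1) by metis
  moreover have "k' [] = u" "k' [0] = c" unfolding k'_def using k w a by auto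
  moreover have "\<forall>v. even (length (k' v) + length v)" unfolding k'_def using k(3) ev
    by (metis comp_apply tau_len)
  ultimately show ?thesis by blast
qed

lemma aut_parity_aut:
  assumes "aut r k" "\<forall>v. even (length (k v) + length v)"
  shows "parity_aut r x k"
  unfolding parity_aut_def
proof (intro conjI)
  show "bij_betw k (tree_verts r) (tree_verts r)" using assms unfolding aut_def by blast
  show "\<forall>u\<in>tree_verts r. \<forall>v\<in>tree_verts r. tree_adj r u v = tree_adj r (k u) (k v)"
    using assms unfolding aut_def by blast
  show "\<forall>v\<in>tree_verts r. even (tdist x v) = even (tdist x (k v))"
  proof
    fix v
    have "even (length (k v) + length v)" using assms by blast
    then show "even (tdist x v) = even (tdist x (k v))" unfolding tdist_x_parity by auto
  qed
qed

lemma pim_pt: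
  assumes "w \<in> I"
  shows "{f \<in> space (PiM I (\<lambda>_. count_space (UNIV::'b set))). f w = c} \<in> sets (PiM I (\<lambda>_. count_space UNIV))"
proof -
  have "(\<lambda>f. f w) \<in> measurable (PiM I (\<lambda>_. count_space (UNIV::'b set))) (count_space UNIV)"
    using measurable_component_singleton[OF assms] by blast
  from measurable_sets[OF this, of "{c}"] show ?thesis
    by (simp add: vimage_def Int_def conj_commute)
qed

lemma pim_cyl:
  assumes "finite S" "S \<subseteq> I"
  shows "{f \<in> space (PiM I (\<lambda>_. count_space (UNIV::'b set))). \<forall>w\<in>S. f w = c w} \<in> sets (PiM I (\<lambda>_. count_space UNIV))"
  using assms by (intro sets.sets_Collect_finite_All pim_pt) auto

locale setting =
  fixes q r :: nat and E :: "nat \<Rightarrow> nat \<Rightarrow> bool" and x :: "nat list"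
    and lam :: "nat \<Rightarrow> real" and \<mu> :: "(nat list \<Rightarrow> nat) measure"
  assumes cg: "constraint_graph q E"
    and conn: "graph_connected q E"
    and nbip: "\<not> graph_bipartite q E"
    and r1: "r \<ge> 1"
    and xv: "x \<in> tree_verts r"
    and lampos: "\<forall>i\<in>{1..q}. lam i > 0"
    and gb: "gibbs r q E lam \<mu>"
    and sg: "simple_gibbs r \<mu>"
    and si: "semi_invariant r x \<mu>"
begin

lemma ps: "prob_space \<mu>" using gb unfolding gibbs_def by blast

sublocale prob_space \<mu> by (rule ps)

lemma sets_eq: "sets \<mu> = sets (cfgM r)" using gb unfolding gibbs_def by blast

lemma space_eq: "space \<mu> = PiE (tree_verts r) (\<lambda>_. UNIV)"
  using sets_eq_imp_space_eq[OF sets_eq] by (simp add: cfgM_def space_PiM)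

lemma AE_hom: "AE \<phi> in \<mu>. is_hom r q E \<phi>" using gb unfolding gibbs_def by blast

lemma comp_meas: "v \<in> tree_verts r \<Longrightarrow> (\<lambda>\<phi>. \<phi> v) \<in> measurable \<mu> (count_space UNIV)"
  unfolding measurable_cong_sets[OF sets_eq refl] cfgM_def
  by (rule measurable_component_singleton)

lemma pt_sets: "v \<in> tree_verts r \<Longrightarrow> {\<phi> \<in> space \<mu>. P (\<phi> v)} \<in> sets \<mu>"
proof -
  assume v: "v \<in> tree_verts r"
  have eq: "{\<phi> \<in> space \<mu>. P (\<phi> v)} = (\<lambda>\<phi>. \<phi> v) -` {a. P a} \<inter> space \<mu>" by blast
  show ?thesis unfolding eq by (rule measurable_sets[OF comp_meas[OF v]]) simp
qed

lemma pt2_sets: "u \<in> tree_verts r \<Longrightarrow> v \<in> tree_verts r \<Longrightarrow> {\<phi> \<in> space \<mu>. P (\<phi> u) (\<phi> v)} \<in> sets \<mu>"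
proof -
  assume u: "u \<in> tree_verts r" and v: "v \<in> tree_verts r"
  have m: "(\<lambda>\<phi>. P (\<phi> u) (\<phi> v)) \<in> measurable \<mu> (count_space UNIV)"
  proof (rule measurable_compose_countable[where f="\<lambda>a \<phi>. P a (\<phi> v)" and g="\<lambda>\<phi>. \<phi> u"])
    show "(\<lambda>\<phi>. \<phi> u) \<in> measurable \<mu> (count_space UNIV)" by (rule comp_meas[OF u])
    fix a :: nat
    show "(\<lambda>\<phi>. P a (\<phi> v)) \<in> measurable \<mu> (count_space UNIV)"
      using measurable_compose[OF comp_meas[OF v], of "P a" "count_space UNIV"] by simp
  qed
  have eq: "{\<phi> \<in> space \<mu>. P (\<phi> u) (\<phi> v)} = (\<lambda>\<phi>. P (\<phi> u) (\<phi> v)) -` {True} \<inter> space \<mu>" by blast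
  show ?thesis unfolding eq by (rule measurable_sets[OF m]) simp
qed

definition cyl :: "nat list set \<Rightarrow> (nat list \<Rightarrow> nat) \<Rightarrow> (nat list \<Rightarrow> nat) set" where
  "cyl W \<eta> = {\<phi> \<in> space \<mu>. \<forall>v\<in>W. \<phi> v = \<eta> v}"

lemma cyl_sets: "finite W \<Longrightarrow> W \<subseteq> tree_verts r \<Longrightarrow> cyl W \<eta> \<in> sets \<mu>"
  unfolding cyl_def by (intro sets.sets_Collect_finite_All pt_sets) auto

lemma cyl_empty[simp]: "cyl {} \<eta> = space \<mu>" unfolding cyl_def by auto

lemma cyl_mono: "V \<subseteq> W \<Longrightarrow> cyl W \<eta> \<subseteq> cyl V \<eta>" unfolding cyl_def by auto

lemma cyl_cong: "(\<forall>v\<in>W. \<eta> v = \<eta>' v) \<Longrightarrow> cyl W \<eta> = cyl W \<eta>'" unfolding cyl_def by auto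

lemma hom_val: "is_hom r q E \<phi> \<Longrightarrow> v \<in> tree_verts r \<Longrightarrow> \<phi> v \<in> {1..q}"
  unfolding is_hom_def hom_on_def by blast

lemma hom_edge: "is_hom r q E \<phi> \<Longrightarrow> tree_adj r u v \<Longrightarrow> E (\<phi> u) (\<phi> v)"
  unfolding is_hom_def hom_on_def using tree_adj_verts by blast

lemma AE_val: assumes v: "v \<in> tree_verts r" shows "AE \<phi> in \<mu>. \<phi> v \<in> {1..q}"
  by (rule eventually_mono[OF AE_hom]) (rule hom_val[OF _ v])

lemma AE_edge: assumes uv: "tree_adj r u v" shows "AE \<phi> in \<mu>. E (\<phi> u) (\<phi> v)"
  by (rule eventually_mono[OF AE_hom]) (rule hom_edge[OF _ uv])

lemma null_bad: assumes v: "v \<in> tree_verts r" shows "prob {\<phi> \<in> space \<mu>. \<phi> v \<notin> {1..q}} = 0"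
proof -
  have "AE \<phi> in \<mu>. \<phi> v \<in> {1..q}" using AE_val[OF v] .
  then have "emeasure \<mu> {\<phi> \<in> space \<mu>. \<phi> v \<notin> {1..q}} = 0"
    using AE_iff_measurable[OF pt_sets[OF v, of "\<lambda>a. a \<notin> {1..q}"], of "\<lambda>\<phi>. \<phi> v \<in> {1..q}"] by simp
  then show ?thesis by (simp add: measure_def)
qed

lemma null_nonedge: assumes uv: "tree_adj r u v" shows "prob {\<phi> \<in> space \<mu>. \<not> E (\<phi> u) (\<phi> v)} = 0"
proof -
  have u: "u \<in> tree_verts r" and v: "v \<in> tree_verts r" using tree_adj_verts[OF uv] by auto
  have "AE \<phi> in \<mu>. E (\<phi> u) (\<phi> v)" using AE_edge[OF uv] .
  then have "emeasure \<mu> {\<phi> \<in> space \<mu>. \<not> E (\<phi> u) (\<phi> v)} = 0"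
    using AE_iff_measurable[OF pt2_sets[OF u v, of "\<lambda>a b. \<not> E a b"], of "\<lambda>\<phi>. E (\<phi> u) (\<phi> v)"] by simp
  then show ?thesis by (simp add: measure_def)
qed

lemma marg:
  assumes W: "finite W" "W \<subseteq> tree_verts r" and v: "v \<in> tree_verts r" "v \<notin> W"
  shows "prob (cyl W \<eta>) = (\<Sum>j\<in>{1..q}. prob (cyl (insert v W) (\<eta>(v := j))))"
proof -
  have eqj: "cyl (insert v W) (\<eta>(v := j)) = {\<phi> \<in> cyl W \<eta>. \<phi> v = j}" for j
    unfolding cyl_def using v by auto
  have AE: "AE \<phi> in \<mu>. \<phi> \<in> cyl W \<eta> \<longleftrightarrow> \<phi> \<in> (\<Union>j\<in>{1..q}. cyl (insert v W) (\<eta>(v := j)))"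
  proof -
    have "AE \<phi> in \<mu>. \<phi> v \<in> {1..q}" using AE_val[OF v(1)] .
    then show ?thesis by (rule eventually_mono) (simp only: eqj, blast)
  qed
  have s: "cyl (insert v W) (\<eta>(v := j)) \<in> sets \<mu>" for j using W v by (intro cyl_sets) auto
  have sU: "(\<Union>j\<in>{1..q}. cyl (insert v W) (\<eta>(v := j))) \<in> sets \<mu>"
    by (rule sets.finite_UN) (simp_all add: s)
  have "prob (cyl W \<eta>) = prob (\<Union>j\<in>{1..q}. cyl (insert v W) (\<eta>(v := j)))"
    by (rule measure_eq_AE[OF AE cyl_sets[OF W] sU])
  also have "\<dots> = (\<Sum>j\<in>{1..q}. prob (cyl (insert v W) (\<eta>(v := j))))"
  proof (rule finite_measure_finite_Union)
    show "finite {1..q}" by simp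
    show "(\<lambda>j. cyl (insert v W) (\<eta>(v := j))) ` {1..q} \<subseteq> sets \<mu>" using s by blast
    show "disjoint_family_on (\<lambda>j. cyl (insert v W) (\<eta>(v := j))) {1..q}"
      unfolding disjoint_family_on_def eqj by blast
  qed
  finally show ?thesis .
qed

definition N :: "nat list \<Rightarrow> nat list set" where "N u = {n. tree_adj r u n}"

lemma N_finite: "finite (N u)" unfolding N_def by (rule nbrs_finite)
lemma N_ne: "u \<in> tree_verts r \<Longrightarrow> N u \<noteq> {}" unfolding N_def using nbrs_nonempty r1 by blast
lemma N_verts: "N u \<subseteq> tree_verts r" unfolding N_def using tree_adj_verts by blast

lemma lemma_G:
  assumes u: "u \<in> tree_verts r" and T: "finite T" "T \<subseteq> tree_verts r" "u \<notin> T"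
    and pos: "prob (cyl {u} \<eta>) > 0"
  shows "prob (cyl (insert u T) \<eta>) =
    prob (cyl {u} \<eta>) * (\<Prod>n\<in>N u. prob (cyl (insert u (T \<inter> tcomp r u n)) \<eta>) / prob (cyl {u} \<eta>))"
proof -
  define C where "C = {\<phi> \<in> space \<mu>. \<phi> u = \<eta> u}"
  have C: "C = cyl {u} \<eta>" unfolding C_def cyl_def by simp
  have Cs: "C \<in> sets \<mu>" unfolding C using u by (intro cyl_sets) auto
  have Cpos: "prob C > 0" using pos C by simp
  have eC: "emeasure \<mu> C \<noteq> 0" "emeasure \<mu> C \<noteq> \<infinity>"
    using Cpos by (auto simp: emeasure_eq_measure)
  let ?MC = "uniform_measure \<mu> C"
  have psC: "prob_space ?MC" by (rule prob_space_uniform_measure[OF eC])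
  let ?M' = "\<lambda>n. PiM (tcomp r u n) (\<lambda>_. count_space (UNIV :: nat set))"
  let ?X = "\<lambda>n \<phi>. restrict \<phi> (tcomp r u n)"
  have Cpos': "prob {\<phi> \<in> space \<mu>. \<phi> u = \<eta> u} > 0" using Cpos unfolding C_def .
  have ind: "prob_space.indep_vars ?MC ?M' ?X (N u)"
    unfolding N_def C_def by (rule bspec[OF sg[unfolded simple_gibbs_def] u, rule_format, OF Cpos'])
  define A where "A n = {f \<in> space (?M' n). \<forall>w\<in>T \<inter> tcomp r u n. f w = \<eta> w}" for n
  have As: "A n \<in> sets (?M' n)" for n unfolding A_def using T by (intro pim_cyl) auto
  have pre: "?X n -` A n \<inter> space ?MC = cyl (T \<inter> tcomp r u n) \<eta>" for n
  proof -
    have sp: "?X n \<phi> \<in> space (?M' n)" for \<phi>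
      by (simp add: space_PiM)
    show ?thesis
    proof (intro set_eqI iffI)
      fix \<phi> assume "\<phi> \<in> ?X n -` A n \<inter> space ?MC"
      then have "\<phi> \<in> space \<mu>" "\<forall>w\<in>T \<inter> tcomp r u n. ?X n \<phi> w = \<eta> w" unfolding A_def by auto
      then show "\<phi> \<in> cyl (T \<inter> tcomp r u n) \<eta>" unfolding cyl_def by simp
    next
      fix \<phi> assume "\<phi> \<in> cyl (T \<inter> tcomp r u n) \<eta>"
      then have "\<phi> \<in> space \<mu>" "\<forall>w\<in>T \<inter> tcomp r u n. ?X n \<phi> w = \<eta> w" unfolding cyl_def by auto
      then show "\<phi> \<in> ?X n -` A n \<inter> space ?MC" unfolding A_def using sp by simp
    qed
  qed
  have inter: "(\<Inter>n\<in>N u. cyl (T \<inter> tcomp r u n) \<eta>) = cyl T \<eta>"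
  proof
    show "cyl T \<eta> \<subseteq> (\<Inter>n\<in>N u. cyl (T \<inter> tcomp r u n) \<eta>)"
      using cyl_mono[of "T \<inter> tcomp r u _" T \<eta>] by blast
    show "(\<Inter>n\<in>N u. cyl (T \<inter> tcomp r u n) \<eta>) \<subseteq> cyl T \<eta>"
    proof
      fix \<phi> assume a: "\<phi> \<in> (\<Inter>n\<in>N u. cyl (T \<inter> tcomp r u n) \<eta>)"
      obtain n0 where "n0 \<in> N u" using N_ne[OF u] by blast
      then have "\<phi> \<in> cyl (T \<inter> tcomp r u n0) \<eta>" using a by blast
      then have sp: "\<phi> \<in> space \<mu>" unfolding cyl_def by blast
      have "\<phi> w = \<eta> w" if w: "w \<in> T" for w
      proof -
        obtain n where n: "tree_adj r u n" "w \<in> tcomp r u n"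
          using in_some_comp[OF u, of w] w T by blast
        then have "n \<in> N u" unfolding N_def by simp
        then have "\<phi> \<in> cyl (T \<inter> tcomp r u n) \<eta>" using a by blast
        then show ?thesis using w n(2) unfolding cyl_def by blast
      qed
      then show "\<phi> \<in> cyl T \<eta>" using sp unfolding cyl_def by blast
    qed
  qed
  have mC: "measure ?MC D = prob (C \<inter> D) / prob C" if "D \<in> sets \<mu>" for D
    using measure_uniform_measure[OF eC that] .
  have Ccyl: "C \<inter> cyl S \<eta> = cyl (insert u S) \<eta>" for S unfolding C_def cyl_def by blast
  have "measure ?MC (\<Inter>n\<in>N u. ?X n -` A n \<inter> space ?MC) = (\<Prod>n\<in>N u. measure ?MC (?X n -` A n \<inter> space ?MC))"
    using prob_space.indep_varsD_finite[OF psC ind N_ne[OF u] N_finite As] .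
  then have m1: "measure ?MC (cyl T \<eta>) = (\<Prod>n\<in>N u. measure ?MC (cyl (T \<inter> tcomp r u n) \<eta>))"
    unfolding pre inter .
  have m2: "measure ?MC (cyl T \<eta>) = prob (cyl (insert u T) \<eta>) / prob C"
    using mC[OF cyl_sets[OF T(1,2)]] Ccyl by simp
  have m3: "measure ?MC (cyl (T \<inter> tcomp r u n) \<eta>) = prob (cyl (insert u (T \<inter> tcomp r u n)) \<eta>) / prob C" for n
  proof -
    have "cyl (T \<inter> tcomp r u n) \<eta> \<in> sets \<mu>" using T by (intro cyl_sets) auto
    from mC[OF this] show ?thesis by (simp only: Ccyl)
  qed
  define Pr where "Pr = (\<Prod>n\<in>N u. prob (cyl (insert u (T \<inter> tcomp r u n)) \<eta>) / prob C)"
  have "prob (cyl (insert u T) \<eta>) / prob C = Pr"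
    unfolding Pr_def using m1 m2 m3 by simp
  then have "prob (cyl (insert u T) \<eta>) = prob C * Pr" using Cpos by (simp add: divide_eq_eq)
  then show ?thesis unfolding Pr_def C .
qed

end

context setting
begin

lemma markov_step:
  assumes u: "u \<in> tree_verts r" and uc: "tree_adj r u c"
    and S: "finite S" "S \<subseteq> tree_verts r" "u \<notin> S" "c \<notin> S" "S \<inter> tcomp r u c = {}"
  shows "prob (cyl (insert c (insert u S)) \<eta>) = prob (cyl (insert u S) \<eta>) * prob (cyl {u, c} \<eta>) / prob (cyl {u} \<eta>)"
proof (cases "prob (cyl {u} \<eta>) = 0")
  case True
  have cv: "c \<in> tree_verts r" using tree_adj_verts[OF uc] by simp
  have "prob (cyl (insert c (insert u S)) \<eta>) \<le> prob (cyl {u} \<eta>)"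
    by (rule finite_measure_mono[OF cyl_mono cyl_sets]) (use u in auto)
  then have "prob (cyl (insert c (insert u S)) \<eta>) = 0" using True measure_nonneg[of \<mu>] by (simp add: antisym)
  then show ?thesis using True by simp
next
  case False
  then have pos: "prob (cyl {u} \<eta>) > 0" using measure_nonneg[of \<mu>] by (simp add: order_less_le)
  let ?p = "prob (cyl {u} \<eta>)"
  have cv: "c \<in> tree_verts r" using tree_adj_verts[OF uc] by simp
  have cN: "c \<in> N u" unfolding N_def using uc by simp
  have cin: "c \<in> tcomp r u n \<longleftrightarrow> n = c" if "n \<in> N u" for n
    using that comp_nbr_eq[of r u n c] self_in_comp[OF uc] uc unfolding N_def by auto
  define F where "F n = prob (cyl (insert u (S \<inter> tcomp r u n)) \<eta>) / ?p" for n
  have G1: "prob (cyl (insert u (insert c S)) \<eta>) = ?p * (\<Prod>n\<in>N u. prob (cyl (insert u (insert c S \<inter> tcomp r u n)) \<eta>) / ?p)"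
    by (rule lemma_G[OF u _ _ _ pos]) (use S cv uc tree_adj_neq in auto)
  have G2: "prob (cyl (insert u S) \<eta>) = ?p * (\<Prod>n\<in>N u. prob (cyl (insert u (S \<inter> tcomp r u n)) \<eta>) / ?p)"
    by (rule lemma_G[OF u S(1,2,3) pos])
  have e1: "prob (cyl (insert u (insert c S \<inter> tcomp r u n)) \<eta>) / ?p = (if n = c then prob (cyl {u, c} \<eta>) / ?p else F n)"
    if "n \<in> N u" for n
  proof (cases "n = c")
    case True
    then have "insert c S \<inter> tcomp r u n = {c}" using S(5) self_in_comp[OF uc] by blast
    then show ?thesis using True by simp
  next
    case False
    then have "insert c S \<inter> tcomp r u n = S \<inter> tcomp r u n" using cin[OF that] by blast
    then show ?thesis using False unfolding F_def by simp
  qed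
  have e2: "F n = (if n = c then 1 else F n)" if "n \<in> N u" for n
  proof (cases "n = c")
    case True
    then have "S \<inter> tcomp r u n = {}" using S(5) by blast
    then show ?thesis using True pos unfolding F_def by simp
  qed simp
  define R where "R = (\<Prod>n\<in>N u - {c}. F n)"
  have P1: "(\<Prod>n\<in>N u. prob (cyl (insert u (insert c S \<inter> tcomp r u n)) \<eta>) / ?p) = prob (cyl {u, c} \<eta>) / ?p * R"
  proof -
    have "(\<Prod>n\<in>N u. prob (cyl (insert u (insert c S \<inter> tcomp r u n)) \<eta>) / ?p)
        = (\<Prod>n\<in>N u. (if n = c then prob (cyl {u, c} \<eta>) / ?p else F n))"
      by (rule prod.cong) (simp_all add: e1)
    also have "\<dots> = prob (cyl {u, c} \<eta>) / ?p * (\<Prod>n\<in>N u - {c}. (if n = c then prob (cyl {u, c} \<eta>) / ?p else F n))"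
      by (subst prod.remove[OF N_finite cN]) simp
    also have "(\<Prod>n\<in>N u - {c}. (if n = c then prob (cyl {u, c} \<eta>) / ?p else F n)) = R"
      unfolding R_def by (rule prod.cong) auto
    finally show ?thesis .
  qed
  have P2: "(\<Prod>n\<in>N u. prob (cyl (insert u (S \<inter> tcomp r u n)) \<eta>) / ?p) = R"
  proof -
    have "(\<Prod>n\<in>N u. prob (cyl (insert u (S \<inter> tcomp r u n)) \<eta>) / ?p) = (\<Prod>n\<in>N u. F n)"
      unfolding F_def ..
    also have "\<dots> = F c * (\<Prod>n\<in>N u - {c}. F n)" by (rule prod.remove[OF N_finite cN])
    also have "F c = 1" using e2[OF cN] by simp
    finally show ?thesis unfolding R_def by simp
  qed
  have "insert c (insert u S) = insert u (insert c S)" by blast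
  then have "prob (cyl (insert c (insert u S)) \<eta>) = ?p * (prob (cyl {u, c} \<eta>) / ?p * R)"
    using G1 P1 by simp
  also have "\<dots> = (?p * R) * prob (cyl {u, c} \<eta>) / ?p" by simp
  also have "?p * R = prob (cyl (insert u S) \<eta>)" using G2 P2 by simp
  finally show ?thesis .
qed

lemma markov_formula:
  assumes "finite W" "W \<subseteq> tree_verts r" "x \<in> W" "\<forall>v\<in>W. v \<noteq> x \<longrightarrow> tparent r x v \<in> W"
  shows "prob (cyl W \<eta>) = prob (cyl {x} \<eta>) *
    (\<Prod>v\<in>W - {x}. prob (cyl {tparent r x v, v} \<eta>) / prob (cyl {tparent r x v} \<eta>))"
  using assms
proof (induction "card W" arbitrary: W rule: less_induct)
  case less
  let ?F = "\<lambda>v. prob (cyl {tparent r x v, v} \<eta>) / prob (cyl {tparent r x v} \<eta>)"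
  show ?case
  proof (cases "W = {x}")
    case True then show ?thesis by simp
  next
    case False
    then have ne: "W - {x} \<noteq> {}" using less.prems(3) by blast
    have fin: "finite (W - {x})" using less.prems(1) by simp
    define m where "m = Max (tdist x ` (W - {x}))"
    have "m \<in> tdist x ` (W - {x})" unfolding m_def using ne fin by (intro Max_in) auto
    then obtain c where c: "c \<in> W" "c \<noteq> x" "tdist x c = m" by blast
    have mx: "tdist x v \<le> m" if "v \<in> W - {x}" for v
      unfolding m_def using fin that by (intro Max_ge) auto
    define W' where "W' = W - {c}"
    have cardlt: "card W' < card W" unfolding W'_def by (rule card_Diff1_less[OF less.prems(1) c(1)])
    have W'1: "finite W'" "W' \<subseteq> tree_verts r" "x \<in> W'" using less.prems c unfolding W'_def by auto
    have cv: "c \<in> tree_verts r" using c(1) less.prems(2) by auto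
    have pc: "tree_adj r (tparent r x c) c \<and> tdist x (tparent r x c) + 1 = tdist x c"
      using tparent_props[OF xv cv c(2)] .
    define u where "u = tparent r x c"
    have W'pc: "\<forall>v\<in>W'. v \<noteq> x \<longrightarrow> tparent r x v \<in> W'"
    proof (intro ballI impI)
      fix v assume v: "v \<in> W'" "v \<noteq> x"
      have vW: "v \<in> W" "v \<in> tree_verts r" using v less.prems(2) unfolding W'_def by auto
      have "tdist x (tparent r x v) + 1 = tdist x v" using tparent_props[OF xv vW(2) v(2)] by simp
      moreover have "tdist x v \<le> tdist x c" using mx[of v] vW v(2) c(3) by simp
      ultimately have "tparent r x v \<noteq> c" by auto
      moreover have "tparent r x v \<in> W" using less.prems(4) vW(1) v(2) by blast
      ultimately show "tparent r x v \<in> W'" unfolding W'_def by blast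
    qed
    have uW': "u \<in> W'"
    proof -
      have "u \<in> W" unfolding u_def using less.prems(4) c by blast
      moreover have "u \<noteq> c" unfolding u_def using pc tree_adj_neq by blast
      ultimately show ?thesis unfolding W'_def by blast
    qed
    have uv: "u \<in> tree_verts r" using uW' W'1 by auto
    have disj: "W' \<inter> tcomp r u c = {}"
      by (rule comp_closed[OF xv W'1(2) W'1(3) W'pc]) (use pc u_def W'_def in auto)
    define S where "S = W' - {u}"
    have step: "prob (cyl (insert c (insert u S)) \<eta>) = prob (cyl (insert u S) \<eta>) * prob (cyl {u, c} \<eta>) / prob (cyl {u} \<eta>)"
      by (rule markov_step[OF uv]) (use pc u_def S_def W'1 disj W'_def in auto)
    have iS: "insert u S = W'" unfolding S_def using uW' by blast
    have iW: "insert c W' = W" unfolding W'_def using c(1) by blast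
    have IH: "prob (cyl W' \<eta>) = prob (cyl {x} \<eta>) * (\<Prod>v\<in>W' - {x}. ?F v)"
      using less.hyps[OF cardlt W'1 W'pc] .
    have pr: "(\<Prod>v\<in>W - {x}. ?F v) = ?F c * (\<Prod>v\<in>W' - {x}. ?F v)"
    proof -
      have "(\<Prod>v\<in>W - {x}. ?F v) = ?F c * (\<Prod>v\<in>W - {x} - {c}. ?F v)"
        by (rule prod.remove) (use fin c in auto)
      moreover have "W - {x} - {c} = W' - {x}" unfolding W'_def by blast
      ultimately show ?thesis by simp
    qed
    have "prob (cyl W \<eta>) = prob (cyl W' \<eta>) * prob (cyl {u, c} \<eta>) / prob (cyl {u} \<eta>)"
      using step by (simp only: iS iW)
    then have "prob (cyl W \<eta>) = prob (cyl W' \<eta>) * ?F c" unfolding u_def by simp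
    then show ?thesis using IH pr by simp
  qed
qed

definition E2 :: "nat list \<Rightarrow> nat list \<Rightarrow> nat \<Rightarrow> nat \<Rightarrow> (nat list \<Rightarrow> nat) set" where
  "E2 u c i j = {\<phi> \<in> space \<mu>. \<phi> u = i \<and> \<phi> c = j}"

lemma E2_swap: "E2 u c i j = E2 c u j i" unfolding E2_def by blast

lemma cyl2: "cyl {u, c} \<eta> = E2 u c (\<eta> u) (\<eta> c)" unfolding cyl_def E2_def by blast

lemma cyl1: "cyl {u} \<eta> = {\<phi> \<in> space \<mu>. \<phi> u = \<eta> u}" unfolding cyl_def by blast

lemma E2_sets: "u \<in> tree_verts r \<Longrightarrow> c \<in> tree_verts r \<Longrightarrow> E2 u c i j \<in> sets \<mu>"
  unfolding E2_def by (rule pt2_sets[of u c "\<lambda>a b. a = i \<and> b = j"])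

lemma si_edge:
  assumes u: "u \<in> tree_verts r" and ev: "even (length u)" and uc: "tree_adj r u c"
  shows "prob (E2 u c i j) = prob (E2 [] [0] i j)"
proof -
  obtain k where k: "aut r k" "k [] = u" "k [0] = c" "\<forall>v. even (length (k v) + length v)"
    using aut_edge[OF u ev uc] by blast
  have pa: "parity_aut r x k" using aut_parity_aut[OF k(1) k(4)] .
  have cv: "c \<in> tree_verts r" using tree_adj_verts[OF uc] by simp
  have Ss: "E2 u c i j \<in> sets \<mu>" using E2_sets[OF u cv] .
  have bij: "bij_betw k (tree_verts r) (tree_verts r)" using k(1) unfolding aut_def by blast
  have inj: "inj_on k (tree_verts r)" using bij bij_betw_def by blast
  have kv: "k v \<in> tree_verts r" if "v \<in> tree_verts r" for v using bij that bij_betwE by blast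
  let ?ki = "inv_into (tree_verts r) k"
  have kiu: "?ki u = []" using inv_into_f_f[OF inj nil_vert] k(2) by simp
  have kic: "?ki c = [0]" using inv_into_f_f[OF inj zero_vert] k(3) by simp
  have kik: "?ki (k v) = v" if "v \<in> tree_verts r" for v using inv_into_f_f[OF inj that] .
  have ceq: "compose_set r (E2 u c i j) k = E2 [] [0] i j"
  proof (intro set_eqI iffI)
    fix \<psi> assume "\<psi> \<in> compose_set r (E2 u c i j) k"
    then obtain \<phi> where \<phi>: "\<phi> \<in> E2 u c i j" "\<psi> = restrict (\<phi> \<circ> k) (tree_verts r)"
      unfolding compose_set_def by blast
    have "\<psi> \<in> space \<mu>" unfolding space_eq \<phi>(2) by simp
    moreover have "\<psi> [] = i" "\<psi> [0] = j" using \<phi> k(2,3) unfolding E2_def by auto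
    ultimately show "\<psi> \<in> E2 [] [0] i j" unfolding E2_def by blast
  next
    fix \<psi> assume \<psi>: "\<psi> \<in> E2 [] [0] i j"
    define \<phi> where "\<phi> = restrict (\<psi> \<circ> ?ki) (tree_verts r)"
    have "\<phi> \<in> space \<mu>" unfolding space_eq \<phi>_def by simp
    moreover have "\<phi> u = i" "\<phi> c = j" using \<psi> u cv kiu kic unfolding \<phi>_def E2_def by auto
    ultimately have \<phi>E: "\<phi> \<in> E2 u c i j" unfolding E2_def by blast
    have "restrict (\<phi> \<circ> k) (tree_verts r) = \<psi>"
    proof
      fix v
      show "restrict (\<phi> \<circ> k) (tree_verts r) v = \<psi> v"
      proof (cases "v \<in> tree_verts r")
        case True
        then show ?thesis unfolding \<phi>_def using kv[OF True] kik[OF True] by simp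
      next
        case False
        have "\<psi> \<in> PiE (tree_verts r) (\<lambda>_. UNIV)" using \<psi> unfolding E2_def space_eq by blast
        then have "\<psi> v = undefined" using False by (simp add: PiE_def extensional_def)
        then show ?thesis using False by simp
      qed
    qed
    then show "\<psi> \<in> compose_set r (E2 u c i j) k" unfolding compose_set_def using \<phi>E by blast
  qed
  have "emeasure \<mu> (compose_set r (E2 u c i j) k) = emeasure \<mu> (E2 u c i j)"
    using si pa Ss unfolding semi_invariant_def by blast
  then show ?thesis unfolding ceq measure_def by simp
qed

definition K :: "nat \<Rightarrow> nat \<Rightarrow> real" where "K i j = prob (E2 [] [0] i j)"
definition J :: "nat \<Rightarrow> nat \<Rightarrow> real" where "J i j = (if even (length x) then K i j else K j i)"

lemma edgeJ:
  assumes u: "u \<in> tree_verts r" and ev: "even (tdist x u)" and uc: "tree_adj r u c"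
  shows "prob (E2 u c i j) = J i j"
proof (cases "even (length x)")
  case True
  then have "even (length u)" using ev tdist_x_parity[of x u] by simp
  then show ?thesis using si_edge[OF u _ uc] True unfolding J_def K_def by simp
next
  case False
  then have ou: "odd (length u)" using ev tdist_x_parity[of x u] by simp
  have cu: "tree_adj r c u" using uc tree_adj_sym by blast
  have cv: "c \<in> tree_verts r" using tree_adj_verts[OF uc] by simp
  have "even (length c)" using adj_len_parity[OF uc] ou by simp
  then have "prob (E2 c u j i) = K j i" using si_edge[OF cv _ cu] unfolding K_def by simp
  then show ?thesis using False E2_swap[of u c i j] unfolding J_def by simp
qed

lemma marg_edge:
  assumes u: "u \<in> tree_verts r" and uc: "tree_adj r u c"
  shows "prob {\<phi> \<in> space \<mu>. \<phi> u = i} = (\<Sum>j\<in>{1..q}. prob (E2 u c i j))"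
proof -
  have cv: "c \<in> tree_verts r" and cu: "c \<noteq> u" using tree_adj_verts[OF uc] tree_adj_neq[OF uc] by auto
  have "prob (cyl {u} (\<lambda>_. i)) = (\<Sum>j\<in>{1..q}. prob (cyl (insert c {u}) ((\<lambda>_. i)(c := j))))"
    by (rule marg) (use u cv cu in auto)
  moreover have "cyl {u} (\<lambda>_. i) = {\<phi> \<in> space \<mu>. \<phi> u = i}" unfolding cyl_def by blast
  moreover have "cyl (insert c {u}) ((\<lambda>_. i)(c := j)) = E2 u c i j" for j
    unfolding cyl_def E2_def using cu by auto
  ultimately show ?thesis by simp
qed

definition alpha :: "nat \<Rightarrow> real" where "alpha i = (\<Sum>j\<in>{1..q}. J i j)"
definition beta :: "nat \<Rightarrow> real" where "beta j = (\<Sum>i\<in>{1..q}. J i j)"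

lemma marg_even:
  assumes u: "u \<in> tree_verts r" and ev: "even (tdist x u)"
  shows "prob {\<phi> \<in> space \<mu>. \<phi> u = i} = alpha i"
proof -
  have uc: "tree_adj r u (u @ [0])" using nbr_snoc0[OF r1 u] .
  show ?thesis unfolding marg_edge[OF u uc] alpha_def using edgeJ[OF u ev uc] by simp
qed

lemma marg_odd:
  assumes u: "u \<in> tree_verts r" and od: "odd (tdist x u)"
  shows "prob {\<phi> \<in> space \<mu>. \<phi> u = j} = beta j"
proof -
  have uc: "tree_adj r u (u @ [0])" using nbr_snoc0[OF r1 u] .
  have cu: "tree_adj r (u @ [0]) u" using uc tree_adj_sym by blast
  have cv: "u @ [0] \<in> tree_verts r" using tree_adj_verts[OF uc] by simp
  have "tdist x u + 1 = tdist x (u @ [0]) \<or> tdist x (u @ [0]) + 1 = tdist x u"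
    using tdist_adj_parent[OF uc, of x] .
  then have "even (tdist x (u @ [0]))" using od by presburger
  then have "prob (E2 u (u @ [0]) j i) = J i j" for i using edgeJ[OF cv _ cu] E2_swap by metis
  then show ?thesis unfolding marg_edge[OF u uc] beta_def by simp
qed

lemma alpha_x: "prob {\<phi> \<in> space \<mu>. \<phi> x = i} = alpha i"
  using marg_even[OF xv] by simp

lemma alpha_sum: "(\<Sum>i\<in>{1..q}. alpha i) = 1"
proof -
  have "prob (cyl {} (\<lambda>_. 0)) = (\<Sum>i\<in>{1..q}. prob (cyl (insert x {}) ((\<lambda>_. 0)(x := i))))"
    by (rule marg) (use xv in auto)
  moreover have "cyl (insert x {}) ((\<lambda>_. 0)(x := i)) = {\<phi> \<in> space \<mu>. \<phi> x = i}" for i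
    unfolding cyl_def by auto
  ultimately show ?thesis using alpha_x prob_space by simp
qed

lemma J_nonneg: "J i j \<ge> 0" unfolding J_def K_def by simp

end

lemma closed_all:
  assumes conn: "graph_connected q E" and S: "S \<subseteq> {1..q}" "s \<in> S"
    and cl: "\<forall>i\<in>S. \<forall>j. E i j \<longrightarrow> j \<in> S"
  shows "S = {1..q}"
proof
  show "S \<subseteq> {1..q}" by (rule S(1))
  show "{1..q} \<subseteq> S"
  proof
    fix j assume j: "j \<in> {1..q}"
    have "E\<^sup>*\<^sup>* s j" using conn S j unfolding graph_connected_def by blast
    then show "j \<in> S" by (induction rule: rtranclp_induct) (use S cl in auto)
  qed
qed

lemma graph_fill:
  assumes cg: "constraint_graph q E" and conn: "graph_connected q E" and nbip: "\<not> graph_bipartite q E"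
    and AB: "A \<subseteq> {1..q}" "B \<subseteq> {1..q}" "A \<noteq> {}"
    and hA: "\<forall>i\<in>A. \<forall>b. E i b \<longrightarrow> b \<in> B" and hB: "\<forall>b\<in>B. \<forall>i. E i b \<longrightarrow> i \<in> A"
  shows "A = {1..q} \<and> B = {1..q}"
proof -
  have sym: "E i j \<Longrightarrow> E j i" for i j using cg unfolding constraint_graph_def by blast
  show ?thesis
  proof (cases "A \<inter> B = {}")
    case False
    then obtain s where s: "s \<in> A \<inter> B" by blast
    have "A \<inter> B = {1..q}"
      by (rule closed_all[OF conn _ s]) (use AB hA hB sym in blast)+
    then show ?thesis using AB by blast
  next
    case True
    obtain s where s: "s \<in> A" using AB by blast
    have all: "A \<union> B = {1..q}"
      by (rule closed_all[OF conn _ UnI1[OF s]]) (use AB hA hB sym in blast)+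
    have "graph_bipartite q E"
      unfolding graph_bipartite_def
    proof (rule exI[of _ "\<lambda>i. i \<in> A"], intro ballI impI)
      fix i j assume ij: "i \<in> {1..q}" "j \<in> {1..q}" "E i j"
      show "(i \<in> A) \<noteq> (j \<in> A)"
      proof (cases "i \<in> A")
        case True
        then have "j \<in> B" using hA ij by blast
        then show ?thesis using True \<open>A \<inter> B = {}\<close> by blast
      next
        case False
        then have "i \<in> B" using all ij by blast
        then have "j \<in> A" using hB sym ij by blast
        then show ?thesis using False by blast
      qed
    qed
    then show ?thesis using nbip by blast
  qed
qed

lemma pos_transfer:
  fixes P L M c :: real
  assumes "0 \<le> L" "L \<le> P" "d \<ge> 1" "P * (L / P) ^ d = M * c"
  shows "L > 0 \<Longrightarrow> M * c > 0" and "M * c > 0 \<Longrightarrow> L > 0"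
proof -
  show "M * c > 0" if "L > 0"
  proof -
    have "P > 0" using that assms by linarith
    then have "P * (L / P) ^ d > 0" using that by simp
    then show ?thesis using assms by simp
  qed
  show "L > 0" if "M * c > 0"
  proof (rule ccontr)
    assume "\<not> L > 0"
    then have "L = 0" using assms by simp
    then have "P * (L / P) ^ d = 0" using assms(3) by (simp add: power_0_left)
    then have "M * c = 0" using assms(4) by linarith
    then show False using that by linarith
  qed
qed

context setting
begin

lemma Esym: "E i j \<Longrightarrow> E j i" using cg unfolding constraint_graph_def by blast

lemma boundary_single: "u \<in> tree_verts r \<Longrightarrow> boundary r {u} = N u"
  unfolding boundary_def N_def using tree_adj_verts tree_adj_neq by fastforce

definition Z :: "nat \<Rightarrow> real" where "Z b = (\<Sum>i\<in>{1..q}. (if E i b then lam i else 0))"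

lemma spec_weight_single:
  assumes u: "u \<in> tree_verts r" and b: "b \<in> {1..q}" and \<phi>: "\<forall>n\<in>N u. \<phi> n = b"
  shows "spec_weight r q E lam {u} \<eta> \<phi> = (if \<eta> u \<in> {1..q} \<and> E (\<eta> u) b then lam (\<eta> u) else 0)"
proof -
  let ?f = "\<lambda>v. if v \<in> {u} then \<eta> v else \<phi> v"
  have bd: "{u} \<union> boundary r {u} = insert u (N u)" using boundary_single[OF u] by simp
  have fn: "?f n = b" if "n \<in> N u" for n
  proof -
    have "n \<noteq> u" using that tree_adj_neq unfolding N_def by blast
    then show ?thesis using \<phi> that by simp
  qed
  have hom: "hom_on r q E (insert u (N u)) ?f \<longleftrightarrow> \<eta> u \<in> {1..q} \<and> E (\<eta> u) b"
  proof
    assume h: "hom_on r q E (insert u (N u)) ?f"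
    obtain n0 where n0: "n0 \<in> N u" using N_ne[OF u] by blast
    have "?f u \<in> {1..q}" using h unfolding hom_on_def by blast
    moreover have "E (?f u) (?f n0)"
      using h n0 unfolding hom_on_def N_def by blast
    ultimately show "\<eta> u \<in> {1..q} \<and> E (\<eta> u) b" using fn[OF n0] by simp
  next
    assume h: "\<eta> u \<in> {1..q} \<and> E (\<eta> u) b"
    have vals: "\<forall>v\<in>insert u (N u). ?f v \<in> {1..q}" using h fn b by auto
    have edges: "E (?f v) (?f w)" if vw: "v \<in> insert u (N u)" "w \<in> insert u (N u)" "tree_adj r v w" for v w
    proof -
      consider "v = u" "w \<in> N u" | "v \<in> N u" "w = u" | "v = u" "w = u" | "v \<in> N u" "w \<in> N u"
        using vw(1,2) by blast
      then show ?thesis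
      proof cases
        case 1 then show ?thesis using fn h by simp
      next
        case 2 then show ?thesis using fn h Esym by simp
      next
        case 3 then show ?thesis using vw(3) adj_nonloop by blast
      next
        case 4 then show ?thesis using vw(3) nbrs_not_adj unfolding N_def by blast
      qed
    qed
    show "hom_on r q E (insert u (N u)) ?f" unfolding hom_on_def using vals edges by blast
  qed
  show ?thesis unfolding spec_weight_def bd hom by simp
qed

lemma PiE_single_bij: "bij_betw (\<lambda>\<eta>. \<eta> u) (PiE {u} (\<lambda>_. A)) A"
proof (rule bij_betwI[where g="\<lambda>i. restrict (\<lambda>_. i) {u}"])
  show "(\<lambda>\<eta>. \<eta> u) \<in> PiE {u} (\<lambda>_. A) \<rightarrow> A" by auto
  show "(\<lambda>i. restrict (\<lambda>_. i) {u}) \<in> A \<rightarrow> PiE {u} (\<lambda>_. A)" by auto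
  show "restrict (\<lambda>_. \<eta> u) {u} = \<eta>" if "\<eta> \<in> PiE {u} (\<lambda>_. A)" for \<eta>
  proof
    fix v show "restrict (\<lambda>_. \<eta> u) {u} v = \<eta> v"
      using that by (cases "v = u") (auto simp: PiE_def extensional_def)
  qed
  show "restrict (\<lambda>_. i) {u} u = i" for i by simp
qed

lemma gibbs_single:
  assumes u: "u \<in> tree_verts r" and b: "b \<in> {1..q}"
  shows "prob (cyl (insert u (N u)) (\<lambda>v. if v = u then i else b)) =
    prob (cyl (N u) (\<lambda>_. b)) * ((if i \<in> {1..q} \<and> E i b then lam i else 0) / Z b)"
proof -
  define \<zeta> where "\<zeta> = (\<lambda>v. if v = u then i else b)"
  define B where "B = cyl (N u) \<zeta>"
  have uN: "u \<notin> N u" using adj_nonloop unfolding N_def by blast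
  have BB: "B = cyl (N u) (\<lambda>_. b)" unfolding B_def \<zeta>_def using uN by (intro cyl_cong) auto
  have Bs: "B \<in> sets \<mu>" unfolding B_def by (rule cyl_sets[OF N_finite N_verts])
  have Bagree: "\<forall>\<phi>\<in>space \<mu>. \<forall>\<psi>\<in>space \<mu>. (\<forall>v\<in>tree_verts r - {u}. \<phi> v = \<psi> v) \<longrightarrow> (\<phi> \<in> B \<longleftrightarrow> \<psi> \<in> B)"
  proof (intro ballI impI)
    fix \<phi> \<psi> assume sp: "\<phi> \<in> space \<mu>" "\<psi> \<in> space \<mu>" and ag: "\<forall>v\<in>tree_verts r - {u}. \<phi> v = \<psi> v"
    have "\<forall>v\<in>N u. \<phi> v = \<psi> v" using ag N_verts uN by blast
    then show "\<phi> \<in> B \<longleftrightarrow> \<psi> \<in> B" using sp unfolding B_def cyl_def by auto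
  qed
  have dlr: "prob ({\<phi> \<in> space \<mu>. \<forall>v\<in>{u}. \<phi> v = \<zeta> v} \<inter> B) =
      (\<integral>\<phi>. indicator B \<phi> * spec_kernel r q E lam {u} \<zeta> \<phi> \<partial>\<mu>)"
    using gb u Bs Bagree unfolding gibbs_def by blast
  have lhs: "{\<phi> \<in> space \<mu>. \<forall>v\<in>{u}. \<phi> v = \<zeta> v} \<inter> B = cyl (insert u (N u)) \<zeta>"
    unfolding B_def cyl_def by blast
  define k0 where "k0 = (if i \<in> {1..q} \<and> E i b then lam i else 0) / Z b"
  have kern: "spec_kernel r q E lam {u} \<zeta> \<phi> = k0" if "\<phi> \<in> B" for \<phi>
  proof -
    have \<phi>N: "\<forall>n\<in>N u. \<phi> n = b" using that unfolding BB cyl_def by blast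
    have num: "spec_weight r q E lam {u} \<zeta> \<phi> = (if i \<in> {1..q} \<and> E i b then lam i else 0)"
      using spec_weight_single[OF u b \<phi>N] unfolding \<zeta>_def by simp
    have "(\<Sum>\<eta>'\<in>PiE {u} (\<lambda>_. {1..q}). spec_weight r q E lam {u} \<eta>' \<phi>)
        = (\<Sum>\<eta>'\<in>PiE {u} (\<lambda>_. {1..q}). (\<lambda>j. if j \<in> {1..q} \<and> E j b then lam j else 0) (\<eta>' u))"
      using spec_weight_single[OF u b \<phi>N] by simp
    also have "\<dots> = (\<Sum>j\<in>{1..q}. (if j \<in> {1..q} \<and> E j b then lam j else 0))"
      by (rule sum.reindex_bij_betw[OF PiE_single_bij])
    also have "\<dots> = Z b" unfolding Z_def by (rule sum.cong) auto
    finally have den: "(\<Sum>\<eta>'\<in>PiE {u} (\<lambda>_. {1..q}). spec_weight r q E lam {u} \<eta>' \<phi>) = Z b" .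
    show ?thesis unfolding spec_kernel_def num den k0_def ..
  qed
  have "(\<integral>\<phi>. indicator B \<phi> * spec_kernel r q E lam {u} \<zeta> \<phi> \<partial>\<mu>) = (\<integral>\<phi>. indicator B \<phi> * k0 \<partial>\<mu>)"
  proof (rule Bochner_Integration.integral_cong[OF refl])
    fix \<phi> assume "\<phi> \<in> space \<mu>"
    show "indicator B \<phi> * spec_kernel r q E lam {u} \<zeta> \<phi> = indicator B \<phi> * k0"
      by (cases "\<phi> \<in> B") (simp_all add: kern)
  qed
  also have "\<dots> = prob B * k0"
  proof -
    have "B \<inter> space \<mu> = B" using sets.sets_into_space[OF Bs] by blast
    then show ?thesis by simp
  qed
  finally show ?thesis using dlr lhs BB unfolding \<zeta>_def k0_def by simp
qed

lemma node_prod: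
  assumes u: "u \<in> tree_verts r" and L: "\<forall>n\<in>N u. prob (E2 u n i b) = L"
  shows "prob (cyl (insert u (N u)) (\<lambda>v. if v = u then i else b)) =
    prob {\<phi> \<in> space \<mu>. \<phi> u = i} * (L / prob {\<phi> \<in> space \<mu>. \<phi> u = i}) ^ card (N u)"
proof -
  define \<zeta> where "\<zeta> = (\<lambda>v. if v = u then i else b)"
  let ?P = "prob {\<phi> \<in> space \<mu>. \<phi> u = i}"
  have c1: "cyl {u} \<zeta> = {\<phi> \<in> space \<mu>. \<phi> u = i}" unfolding cyl_def \<zeta>_def by simp
  have uN: "u \<notin> N u" using adj_nonloop unfolding N_def by blast
  show ?thesis
  proof (cases "?P = 0")
    case True
    have "prob (cyl (insert u (N u)) \<zeta>) \<le> prob (cyl {u} \<zeta>)"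
      by (rule finite_measure_mono[OF cyl_mono cyl_sets]) (use u in auto)
    then have "prob (cyl (insert u (N u)) \<zeta>) = 0" using True c1 measure_nonneg[of \<mu>] by (simp add: antisym)
    then show ?thesis using True unfolding \<zeta>_def by simp
  next
    case False
    then have pos: "prob (cyl {u} \<zeta>) > 0" using c1 measure_nonneg[of \<mu>] by (simp add: order_less_le)
    have "prob (cyl (insert u (N u)) \<zeta>) = prob (cyl {u} \<zeta>) *
        (\<Prod>n\<in>N u. prob (cyl (insert u (N u \<inter> tcomp r u n)) \<zeta>) / prob (cyl {u} \<zeta>))"
      by (rule lemma_G[OF u N_finite N_verts uN pos])
    also have "(\<Prod>n\<in>N u. prob (cyl (insert u (N u \<inter> tcomp r u n)) \<zeta>) / prob (cyl {u} \<zeta>))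
        = (\<Prod>n\<in>N u. L / ?P)"
    proof (rule prod.cong[OF refl])
      fix n assume n: "n \<in> N u"
      have "N u \<inter> tcomp r u n = {n}"
        using n comp_nbr_eq[of r u n] self_in_comp[of r u n] unfolding N_def by blast
      moreover have "n \<noteq> u" using n uN by blast
      ultimately have "cyl (insert u (N u \<inter> tcomp r u n)) \<zeta> = E2 u n i b"
        using cyl2[of u n \<zeta>] unfolding \<zeta>_def by simp
      then show "prob (cyl (insert u (N u \<inter> tcomp r u n)) \<zeta>) / prob (cyl {u} \<zeta>) = L / ?P"
        using L n c1 by simp
    qed
    finally show ?thesis using c1 unfolding \<zeta>_def by simp
  qed
qed

end

context setting
begin

definition x' :: "nat list" where "x' = x @ [0]"

lemma xx': "tree_adj r x x'" unfolding x'_def using nbr_snoc0[OF r1 xv] .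
lemma x'v: "x' \<in> tree_verts r" using tree_adj_verts[OF xx'] by simp
lemma x'odd: "odd (tdist x x')" using tree_adj_tdist[OF xx'] by simp

definition dx :: nat where "dx = card (N x)"
definition dx' :: nat where "dx' = card (N x')"

lemma dx_pos: "dx \<ge> 1" unfolding dx_def using N_finite N_ne[OF xv] by (simp add: Suc_le_eq card_gt_0_iff)
lemma dx'_pos: "dx' \<ge> 1" unfolding dx'_def using N_finite N_ne[OF x'v] by (simp add: Suc_le_eq card_gt_0_iff)

definition Bx :: "nat \<Rightarrow> real" where "Bx b = prob (cyl (N x) (\<lambda>_. b))"
definition Bx' :: "nat \<Rightarrow> real" where "Bx' i = prob (cyl (N x') (\<lambda>_. i))"

lemma X1:
  assumes b: "b \<in> {1..q}"
  shows "alpha i * (J i b / alpha i) ^ dx = Bx b * ((if i \<in> {1..q} \<and> E i b then lam i else 0) / Z b)"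
proof -
  have L: "\<forall>n\<in>N x. prob (E2 x n i b) = J i b"
    using edgeJ[OF xv, of _ i b] unfolding N_def by simp
  show ?thesis using node_prod[OF xv L] gibbs_single[OF xv b, of i] alpha_x
    unfolding dx_def Bx_def by simp
qed

lemma X2:
  assumes i: "i \<in> {1..q}"
  shows "beta b * (J i b / beta b) ^ dx' = Bx' i * ((if b \<in> {1..q} \<and> E b i then lam b else 0) / Z i)"
proof -
  have L: "\<forall>n\<in>N x'. prob (E2 x' n b i) = J i b"
  proof
    fix n assume n: "n \<in> N x'"
    then have adj: "tree_adj r x' n" unfolding N_def by simp
    have nv: "n \<in> tree_verts r" using tree_adj_verts[OF adj] by simp
    have "tdist x x' + 1 = tdist x n \<or> tdist x n + 1 = tdist x x'" using tdist_adj_parent[OF adj] .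
    then have ev: "even (tdist x n)" using x'odd by presburger
    have "prob (E2 n x' i b) = J i b"
      by (rule edgeJ[OF nv ev]) (use adj tree_adj_sym in blast)
    then show "prob (E2 x' n b i) = J i b" using E2_swap by metis
  qed
  have Pb: "prob {\<phi> \<in> space \<mu>. \<phi> x' = b} = beta b" using marg_odd[OF x'v x'odd] .
  show ?thesis using node_prod[OF x'v L] gibbs_single[OF x'v i, of b] Pb
    unfolding dx'_def Bx'_def by simp
qed

lemma J_le_alpha: "b \<in> {1..q} \<Longrightarrow> J i b \<le> alpha i"
  unfolding alpha_def by (rule member_le_sum) (auto simp: J_nonneg)

lemma J_le_beta: "i \<in> {1..q} \<Longrightarrow> J i b \<le> beta b"
  unfolding beta_def by (rule member_le_sum) (auto simp: J_nonneg)

lemma Z_nonneg: "Z b \<ge> 0" unfolding Z_def using lampos by (intro sum_nonneg) (auto intro: less_imp_le)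

lemma lamnn: "i \<in> {1..q} \<Longrightarrow> lam i \<ge> 0" using lampos by (simp add: less_imp_le)

lemma Bx_nonneg: "Bx b \<ge> 0" unfolding Bx_def by simp
lemma Bx'_nonneg: "Bx' b \<ge> 0" unfolding Bx'_def by simp

lemma edge_range: "E i j \<Longrightarrow> i \<in> {1..q} \<and> j \<in> {1..q}"
  using cg unfolding constraint_graph_def by blast

lemma sum_pos_ex: fixes f :: "nat \<Rightarrow> real"
  assumes "(\<Sum>i\<in>{1..q}. f i) > 0" shows "\<exists>i\<in>{1..q}. f i > 0"
proof (rule ccontr)
  assume "\<not> ?thesis"
  then have "(\<Sum>i\<in>{1..q}. f i) \<le> 0" by (intro sum_nonpos) (simp add: not_less)
  then show False using assms by simp
qed

lemma prod_pos_split: fixes M c :: real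
  assumes "M \<ge> 0" "c \<ge> 0" "M * c > 0" shows "M > 0" "c > 0"
  using assms by (auto simp: zero_less_mult_iff)

lemma beta_spread:
  assumes b: "b \<in> {1..q}" and bp: "beta b > 0"
  shows "Bx b > 0" "Z b > 0" "\<And>i. E i b \<Longrightarrow> J i b > 0"
proof -
  obtain i0 where i0: "i0 \<in> {1..q}" "J i0 b > 0" using sum_pos_ex bp unfolding beta_def by blast
  have c0: "Bx b * ((if i0 \<in> {1..q} \<and> E i0 b then lam i0 else 0) / Z b) > 0"
    using pos_transfer(1)[OF J_nonneg J_le_alpha[OF b] dx_pos X1[OF b] i0(2)] .
  have wnn: "(if i0 \<in> {1..q} \<and> E i0 b then lam i0 else 0) / Z b \<ge> 0"
    using lamnn[of i0] Z_nonneg[of b] by (simp add: divide_nonneg_nonneg)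
  show Bp: "Bx b > 0" using prod_pos_split(1)[OF Bx_nonneg wnn c0] .
  have "(if i0 \<in> {1..q} \<and> E i0 b then lam i0 else 0) / Z b > 0" using prod_pos_split(2)[OF Bx_nonneg wnn c0] .
  then show Zp: "Z b > 0" using Z_nonneg[of b] by (cases "Z b = 0") auto
  show "J i b > 0" if e: "E i b" for i
  proof -
    have i: "i \<in> {1..q}" using edge_range[OF e] by simp
    have "Bx b * ((if i \<in> {1..q} \<and> E i b then lam i else 0) / Z b) > 0"
      using Bp Zp lampos i e by simp
    then show ?thesis using pos_transfer(2)[OF J_nonneg J_le_alpha[OF b] dx_pos X1[OF b]] by blast
  qed
qed

lemma alpha_spread:
  assumes i: "i \<in> {1..q}" and ap: "alpha i > 0"
  shows "\<And>b. E i b \<Longrightarrow> J i b > 0"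
proof -
  obtain b0 where b0: "b0 \<in> {1..q}" "J i b0 > 0" using sum_pos_ex ap unfolding alpha_def by blast
  have c0: "Bx' i * ((if b0 \<in> {1..q} \<and> E b0 i then lam b0 else 0) / Z i) > 0"
    using pos_transfer(1)[OF J_nonneg J_le_beta[OF i] dx'_pos X2[OF i] b0(2)] .
  have wnn: "(if b0 \<in> {1..q} \<and> E b0 i then lam b0 else 0) / Z i \<ge> 0"
    using lamnn[of b0] Z_nonneg[of i] by (simp add: divide_nonneg_nonneg)
  have Bp: "Bx' i > 0" using prod_pos_split(1)[OF Bx'_nonneg wnn c0] .
  have "(if b0 \<in> {1..q} \<and> E b0 i then lam b0 else 0) / Z i > 0" using prod_pos_split(2)[OF Bx'_nonneg wnn c0] .
  then have Zp: "Z i > 0" using Z_nonneg[of i] by (cases "Z i = 0") auto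
  show "J i b > 0" if e: "E i b" for b
  proof -
    have b: "b \<in> {1..q}" using edge_range[OF e] by simp
    have "Bx' i * ((if b \<in> {1..q} \<and> E b i then lam b else 0) / Z i) > 0"
      using Bp Zp lampos b Esym[OF e] by simp
    then show ?thesis using pos_transfer(2)[OF J_nonneg J_le_beta[OF i] dx'_pos X2[OF i]] by blast
  qed
qed

lemma all_pos: "\<forall>i\<in>{1..q}. alpha i > 0" "\<forall>b\<in>{1..q}. beta b > 0"
proof -
  define A where "A = {i\<in>{1..q}. alpha i > 0}"
  define B where "B = {b\<in>{1..q}. beta b > 0}"
  have alpha_nn: "alpha i \<ge> 0" for i unfolding alpha_def by (intro sum_nonneg) (simp add: J_nonneg)
  have Ane: "A \<noteq> {}"
  proof
    assume "A = {}"
    then have "(\<Sum>i\<in>{1..q}. alpha i) \<le> 0" unfolding A_def by (intro sum_nonpos) (auto simp: not_less)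
    then show False using alpha_sum by simp
  qed
  have hA: "\<forall>i\<in>A. \<forall>b. E i b \<longrightarrow> b \<in> B"
  proof (intro ballI allI impI)
    fix i b assume i: "i \<in> A" and e: "E i b"
    have "J i b > 0" using alpha_spread[of i b] i e unfolding A_def by blast
    moreover have "b \<in> {1..q}" using edge_range[OF e] by simp
    ultimately show "b \<in> B" unfolding B_def using J_le_beta[of i b] edge_range[OF e] by force
  qed
  have hB: "\<forall>b\<in>B. \<forall>i. E i b \<longrightarrow> i \<in> A"
  proof (intro ballI allI impI)
    fix i b assume b: "b \<in> B" and e: "E i b"
    have "J i b > 0" using beta_spread(3)[of b i] b e unfolding B_def by blast
    moreover have "i \<in> {1..q}" using edge_range[OF e] by simp
    ultimately show "i \<in> A" unfolding A_def using J_le_alpha[of b i] edge_range[OF e] by force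
  qed
  have "A = {1..q} \<and> B = {1..q}"
    by (rule graph_fill[OF cg conn nbip _ _ Ane hA hB]) (auto simp: A_def B_def)
  then show "\<forall>i\<in>{1..q}. alpha i > 0" "\<forall>b\<in>{1..q}. beta b > 0" unfolding A_def B_def by blast+
qed

lemma J_nonedge: assumes "\<not> E i b" shows "J i b = 0"
proof -
  have "J i b = prob (E2 x x' i b)" using edgeJ[OF xv _ xx'] by simp
  also have "\<dots> \<le> prob {\<phi> \<in> space \<mu>. \<not> E (\<phi> x) (\<phi> x')}"
    by (rule finite_measure_mono) (use assms x'v xv in \<open>auto simp: E2_def intro: pt2_sets\<close>)
  also have "\<dots> = 0" by (rule null_nonedge[OF xx'])
  finally show ?thesis using J_nonneg[of i b] by simp
qed

definition Mb :: "nat \<Rightarrow> real" where "Mb b = Bx b / Z b"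
definition ff :: "nat \<Rightarrow> real" where "ff i = root dx (lam i * alpha i ^ (dx - 1))"
definition gg :: "nat \<Rightarrow> real" where "gg b = root dx (Mb b)"

lemma ff_pos: "i \<in> {1..q} \<Longrightarrow> ff i > 0"
  unfolding ff_def using dx_pos all_pos(1) lampos by (intro real_root_gt_zero) auto

lemma gg_pos: "b \<in> {1..q} \<Longrightarrow> gg b > 0"
  unfolding gg_def Mb_def using dx_pos beta_spread(1,2) all_pos(2) by (intro real_root_gt_zero) auto

lemma J_rank1:
  assumes i: "i \<in> {1..q}" and b: "b \<in> {1..q}"
  shows "J i b = (if E i b then ff i * gg b else 0)"
proof (cases "E i b")
  case False then show ?thesis using J_nonedge by simp
next
  case True
  have ap: "alpha i > 0" using all_pos(1) i by blast
  obtain d0 where d0: "dx = Suc d0" using dx_pos by (cases dx) auto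
  have "alpha i * (J i b / alpha i) ^ dx = Bx b * (lam i / Z b)" using X1[OF b, of i] i True by simp
  moreover have "alpha i * (J i b / alpha i) ^ dx = J i b ^ dx / alpha i ^ d0"
    using ap unfolding d0 by (simp add: power_divide field_simps)
  ultimately have "J i b ^ dx = Mb b * (lam i * alpha i ^ (dx - 1))"
    using ap unfolding Mb_def d0 by (simp add: field_simps)
  then have "J i b = root dx (Mb b * (lam i * alpha i ^ (dx - 1)))"
    using real_root_power_cancel[of dx "J i b"] dx_pos J_nonneg by simp
  then show ?thesis using True unfolding ff_def gg_def by (simp add: real_root_mult)
qed

lemma alpha_ff: "i \<in> {1..q} \<Longrightarrow> alpha i = ff i * (\<Sum>b\<in>{b\<in>{1..q}. E i b}. gg b)"
proof -
  assume i: "i \<in> {1..q}"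
  have "alpha i = (\<Sum>b\<in>{1..q}. (if E i b then ff i * gg b else 0))"
    unfolding alpha_def using J_rank1[OF i] by simp
  also have "\<dots> = (\<Sum>b\<in>{b\<in>{1..q}. E i b}. ff i * gg b)" by (rule sum.inter_filter[symmetric, OF finite_atLeastAtMost])
  finally show ?thesis by (simp add: sum_distrib_left)
qed

lemma beta_gg: "b \<in> {1..q} \<Longrightarrow> beta b = gg b * (\<Sum>i\<in>{i\<in>{1..q}. E i b}. ff i)"
proof -
  assume b: "b \<in> {1..q}"
  have "beta b = (\<Sum>i\<in>{1..q}. (if E i b then ff i * gg b else 0))"
    unfolding beta_def using J_rank1[OF _ b] by simp
  also have "\<dots> = (\<Sum>i\<in>{i\<in>{1..q}. E i b}. ff i * gg b)" by (rule sum.inter_filter[symmetric, OF finite_atLeastAtMost])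
  also have "\<dots> = (\<Sum>i\<in>{i\<in>{1..q}. E i b}. ff i) * gg b" by (rule sum_distrib_right[symmetric])
  finally show ?thesis by (simp only: mult.commute)
qed

end

context setting
begin

definition w :: "int \<Rightarrow> real" where "w k = (if k > 0 then ff (nat k) else gg (nat (- k)))"

lemma w_pos: "k \<in> double_nodes q \<Longrightarrow> w k > 0"
proof -
  assume k: "k \<in> double_nodes q"
  then have k0: "k \<noteq> 0" "\<bar>k\<bar> \<le> int q" unfolding double_nodes_def by auto
  show ?thesis
  proof (cases "k > 0")
    case True
    then have "nat k \<in> {1..q}" using k0 by auto
    then show ?thesis unfolding w_def using True ff_pos by simp
  next
    case False
    then have "nat (- k) \<in> {1..q}" using k0 by auto
    then show ?thesis unfolding w_def using False gg_pos by simp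
  qed
qed

lemma w_plus: "i \<ge> 1 \<Longrightarrow> w (int i) = ff i" unfolding w_def by simp
lemma w_minus: "b \<ge> 1 \<Longrightarrow> w (- int b) = gg b" unfolding w_def by simp

lemma dadj_pos_neg: "double_adj q E (int i) (- int b) \<longleftrightarrow> i \<in> {1..q} \<and> b \<in> {1..q} \<and> E i b"
  unfolding double_adj_def double_nodes_def by (auto simp: mult_less_0_iff)

lemma dadj_neg_pos: "double_adj q E (- int b) (int i) \<longleftrightarrow> i \<in> {1..q} \<and> b \<in> {1..q} \<and> E i b"
  unfolding double_adj_def double_nodes_def using Esym by (auto simp: mult_less_0_iff)

lemma zsum_plus:
  assumes i: "i \<in> {1..q}"
  shows "zsum q E w (int i) = (\<Sum>b\<in>{b\<in>{1..q}. E i b}. gg b)"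
proof -
  have seq: "{j \<in> double_nodes q. double_adj q E (int i) j} = (\<lambda>b. - int b) ` {b\<in>{1..q}. E i b}"
  proof (intro set_eqI iffI)
    fix j assume j: "j \<in> {j \<in> double_nodes q. double_adj q E (int i) j}"
    then have "int i * j < 0" "j \<in> double_nodes q" "E i (nat \<bar>j\<bar>)" unfolding double_adj_def by auto
    moreover have "int i > 0" using i by simp
    ultimately have "j < 0" "j = - int (nat (- j))" "nat (- j) \<in> {1..q}" "E i (nat (- j))"
      unfolding double_nodes_def by (auto simp: mult_less_0_iff)
    then show "j \<in> (\<lambda>b. - int b) ` {b\<in>{1..q}. E i b}" by blast
  next
    fix j assume "j \<in> (\<lambda>b. - int b) ` {b\<in>{1..q}. E i b}"
    then obtain b where b: "b \<in> {1..q}" "E i b" "j = - int b" by blast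
    then show "j \<in> {j \<in> double_nodes q. double_adj q E (int i) j}"
      using dadj_pos_neg[of i b] i unfolding double_adj_def by auto
  qed
  have "zsum q E w (int i) = (\<Sum>b\<in>{b\<in>{1..q}. E i b}. w (- int b))"
    unfolding zsum_def seq by (subst sum.reindex) (auto simp: inj_on_def)
  also have "\<dots> = (\<Sum>b\<in>{b\<in>{1..q}. E i b}. gg b)" by (rule sum.cong) (auto simp: w_minus)
  finally show ?thesis .
qed

lemma zsum_minus:
  assumes b: "b \<in> {1..q}"
  shows "zsum q E w (- int b) = (\<Sum>i\<in>{i\<in>{1..q}. E i b}. ff i)"
proof -
  have seq: "{j \<in> double_nodes q. double_adj q E (- int b) j} = int ` {i\<in>{1..q}. E i b}"
  proof (intro set_eqI iffI)
    fix j assume j: "j \<in> {j \<in> double_nodes q. double_adj q E (- int b) j}"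
    then have "- int b * j < 0" "j \<in> double_nodes q" "E b (nat \<bar>j\<bar>)" unfolding double_adj_def by auto
    moreover have "int b > 0" using b by simp
    ultimately have jp: "j > 0" by (simp add: mult_less_0_iff zero_less_mult_iff)
    then have "j = int (nat j)" "nat j \<in> {1..q}" "E (nat j) b"
      using \<open>j \<in> double_nodes q\<close> \<open>E b (nat \<bar>j\<bar>)\<close> Esym unfolding double_nodes_def by auto
    then show "j \<in> int ` {i\<in>{1..q}. E i b}" by blast
  next
    fix j assume "j \<in> int ` {i\<in>{1..q}. E i b}"
    then obtain i where i: "i \<in> {1..q}" "E i b" "j = int i" by blast
    then show "j \<in> {j \<in> double_nodes q. double_adj q E (- int b) j}"
      using dadj_neg_pos[of b i] b unfolding double_adj_def by auto
  qed
  have "zsum q E w (- int b) = (\<Sum>i\<in>{i\<in>{1..q}. E i b}. w (int i))"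
    unfolding zsum_def seq by (subst sum.reindex) (auto simp: inj_on_def)
  also have "\<dots> = (\<Sum>i\<in>{i\<in>{1..q}. E i b}. ff i)" by (rule sum.cong) (auto simp: w_plus)
  finally show ?thesis .
qed

lemma alpha_w: "i \<in> {1..q} \<Longrightarrow> alpha i = w (int i) * zsum q E w (int i)"
  using alpha_ff zsum_plus w_plus by simp

lemma beta_w: "b \<in> {1..q} \<Longrightarrow> beta b = w (- int b) * zsum q E w (- int b)"
  using beta_gg zsum_minus w_minus by simp

lemma root_dist_eq: "i \<in> {1..q} \<Longrightarrow> root_dist q E w (int i) = alpha i"
proof -
  assume i: "i \<in> {1..q}"
  have "(\<Sum>j\<in>{1..int q}. w j * zsum q E w j) = (\<Sum>j\<in>int ` {1..q}. w j * zsum q E w j)"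
  proof -
    have "{1..int q} = int ` {1..q}" by (simp add: image_int_atLeastAtMost)
    then show ?thesis by simp
  qed
  also have "\<dots> = (\<Sum>i\<in>{1..q}. w (int i) * zsum q E w (int i))" by (subst sum.reindex) auto
  also have "\<dots> = (\<Sum>i\<in>{1..q}. alpha i)" by (rule sum.cong) (auto simp: alpha_w)
  also have "\<dots> = 1" by (rule alpha_sum)
  finally have den: "(\<Sum>j\<in>{1..int q}. w j * zsum q E w j) = 1" .
  show ?thesis unfolding root_dist_def den using i alpha_w[OF i] by simp
qed

definition sgnc :: "(nat list \<Rightarrow> nat) \<Rightarrow> (nat list \<Rightarrow> int)" where
  "sgnc \<phi> = (\<lambda>v\<in>tree_verts r. if even (tdist x v) then int (\<phi> v) else - int (\<phi> v))"

lemma sgnc_meas: "sgnc \<in> measurable \<mu> (cfgM2 r)"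
  unfolding sgnc_def cfgM2_def
proof (rule measurable_restrict)
  fix v assume v: "v \<in> tree_verts r"
  show "(\<lambda>\<phi>. if even (tdist x v) then int (\<phi> v) else - int (\<phi> v)) \<in> measurable \<mu> (count_space UNIV)"
    using measurable_compose[OF comp_meas[OF v], of "\<lambda>a. if even (tdist x v) then int a else - int a" "count_space UNIV"]
    by simp
qed

lemma abs_meas: "abs_cfg r \<in> measurable (cfgM2 r) (cfgM r)"
  unfolding abs_cfg_def cfgM2_def cfgM_def
proof (rule measurable_restrict)
  fix v assume v: "v \<in> tree_verts r"
  show "(\<lambda>\<psi>. nat \<bar>\<psi> v\<bar>) \<in> measurable (PiM (tree_verts r) (\<lambda>_. count_space (UNIV :: int set))) (count_space UNIV)"
  proof -
    have "(\<lambda>\<psi>::nat list \<Rightarrow> int. \<psi> v) \<in> measurable (PiM (tree_verts r) (\<lambda>_. count_space (UNIV :: int set))) (count_space UNIV)"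
      using measurable_component_singleton[OF v, of "\<lambda>_. count_space (UNIV :: int set)"] by simp
    then show ?thesis by (rule measurable_compose) simp
  qed
qed

definition \<nu> :: "(nat list \<Rightarrow> int) measure" where "\<nu> = distr \<mu> (cfgM2 r) sgnc"

lemma mu_eq: "\<mu> = distr \<nu> (cfgM r) (abs_cfg r)"
proof -
  have "distr \<nu> (cfgM r) (abs_cfg r) = distr \<mu> (cfgM r) (abs_cfg r \<circ> sgnc)"
    unfolding \<nu>_def by (rule distr_distr[OF abs_meas sgnc_meas])
  also have "\<dots> = distr \<mu> (cfgM r) (\<lambda>\<phi>. \<phi>)"
  proof (rule distr_cong[OF refl refl])
    fix \<phi> assume \<phi>: "\<phi> \<in> space \<mu>"
    show "(abs_cfg r \<circ> sgnc) \<phi> = \<phi>"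
    proof
      fix v show "(abs_cfg r \<circ> sgnc) \<phi> v = \<phi> v"
      proof (cases "v \<in> tree_verts r")
        case True then show ?thesis unfolding abs_cfg_def sgnc_def by simp
      next
        case False
        then have "\<phi> v = undefined" using \<phi> unfolding space_eq by (simp add: PiE_def extensional_def)
        then show ?thesis using False unfolding abs_cfg_def sgnc_def by simp
      qed
    qed
  qed
  also have "\<dots> = \<mu>" by (rule distr_id2) (simp add: sets_eq)
  finally show ?thesis ..
qed

lemma nu_prob: "prob_space \<nu>" unfolding \<nu>_def by (rule prob_space_distr[OF sgnc_meas])

lemma nu_sets: "sets \<nu> = sets (cfgM2 r)" unfolding \<nu>_def by simp

lemma ball_sub: "ball r x n \<subseteq> tree_verts r" unfolding ball_def by blast

lemma ball_pc: "\<forall>v\<in>ball r x n. v \<noteq> x \<longrightarrow> tparent r x v \<in> ball r x n"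
  using ball_parent[OF xv] by blast

definition good :: "nat \<Rightarrow> (nat list \<Rightarrow> int) \<Rightarrow> nat list \<Rightarrow> bool" where
  "good n \<zeta> v \<longleftrightarrow> \<zeta> v \<in> double_nodes q \<and> (0 < \<zeta> v \<longleftrightarrow> even (tdist x v))"

lemma nu_cyl:
  "measure \<nu> {\<psi> \<in> space \<nu>. \<forall>v\<in>ball r x n. \<psi> v = \<zeta> v} =
   prob {\<phi> \<in> space \<mu>. \<forall>v\<in>ball r x n. (if even (tdist x v) then int (\<phi> v) else - int (\<phi> v)) = \<zeta> v}"
proof -
  have sp: "space \<nu> = space (cfgM2 r)" unfolding \<nu>_def by simp
  have Ss: "{\<psi> \<in> space (cfgM2 r). \<forall>v\<in>ball r x n. \<psi> v = \<zeta> v} \<in> sets (cfgM2 r)"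
    unfolding cfgM2_def by (rule pim_cyl[OF ball_finite ball_sub])
  have "measure \<nu> {\<psi> \<in> space \<nu>. \<forall>v\<in>ball r x n. \<psi> v = \<zeta> v}
      = prob (sgnc -` {\<psi> \<in> space (cfgM2 r). \<forall>v\<in>ball r x n. \<psi> v = \<zeta> v} \<inter> space \<mu>)"
    unfolding sp unfolding \<nu>_def by (rule measure_distr[OF sgnc_meas Ss])
  also have "sgnc -` {\<psi> \<in> space (cfgM2 r). \<forall>v\<in>ball r x n. \<psi> v = \<zeta> v} \<inter> space \<mu>
      = {\<phi> \<in> space \<mu>. \<forall>v\<in>ball r x n. (if even (tdist x v) then int (\<phi> v) else - int (\<phi> v)) = \<zeta> v}"
  proof -
    have "sgnc \<phi> \<in> space (cfgM2 r)" for \<phi> unfolding sgnc_def cfgM2_def by (simp add: space_PiM)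
    moreover have "sgnc \<phi> v = (if even (tdist x v) then int (\<phi> v) else - int (\<phi> v))" if "v \<in> ball r x n" for \<phi> v
      using that ball_sub unfolding sgnc_def by auto
    ultimately show ?thesis by auto
  qed
  finally show ?thesis .
qed

end

context setting
begin

lemma good_nat: "good n \<zeta> v \<Longrightarrow> nat \<bar>\<zeta> v\<bar> \<in> {1..q}"
  unfolding good_def double_nodes_def by auto

lemma sv_iff:
  assumes g: "good n \<zeta> v"
  shows "((if even (tdist x v) then int (\<phi> v) else - int (\<phi> v)) = \<zeta> v) \<longleftrightarrow> \<phi> v = nat \<bar>\<zeta> v\<bar>"
  using g unfolding good_def double_nodes_def by auto

lemma bad_val:
  assumes "\<not> good n \<zeta> v" "\<phi> v \<in> {1..q}"
  shows "(if even (tdist x v) then int (\<phi> v) else - int (\<phi> v)) \<noteq> \<zeta> v"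
  using assms unfolding good_def double_nodes_def by auto

lemma factor_eq:
  assumes v: "v \<in> ball r x n" "v \<noteq> x" and gp: "good n \<zeta> (tparent r x v)" and gv: "good n \<zeta> v"
  defines "\<eta> \<equiv> \<lambda>v. nat \<bar>\<zeta> v\<bar>"
  shows "(if double_adj q E (\<zeta> (tparent r x v)) (\<zeta> v) then w (\<zeta> v) / zsum q E w (\<zeta> (tparent r x v)) else 0)
    = prob (cyl {tparent r x v, v} \<eta>) / prob (cyl {tparent r x v} \<eta>)"
proof -
  let ?p = "tparent r x v"
  have vv: "v \<in> tree_verts r" using v ball_sub by blast
  have pp: "tree_adj r ?p v \<and> tdist x ?p + 1 = tdist x v" using tparent_props[OF xv vv v(2)] .
  have pv: "?p \<in> tree_verts r" using tree_adj_verts pp by blast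
  have c2: "cyl {?p, v} \<eta> = E2 ?p v (\<eta> ?p) (\<eta> v)" by (rule cyl2)
  have c1: "cyl {?p} \<eta> = {\<phi> \<in> space \<mu>. \<phi> ?p = \<eta> ?p}" by (rule cyl1)
  have ip: "\<eta> ?p \<in> {1..q}" and iv: "\<eta> v \<in> {1..q}" unfolding \<eta>_def using good_nat gp gv by auto
  show ?thesis
  proof (cases "even (tdist x ?p)")
    case True
    define i where "i = \<eta> ?p"
    define b where "b = \<eta> v"
    have ov: "odd (tdist x v)" using True pp[THEN conjunct2] by presburger
    have zp: "\<zeta> ?p = int i" using gp True unfolding good_def i_def \<eta>_def by auto
    have zv: "\<zeta> v = - int b" using gv ov unfolding good_def b_def \<eta>_def double_nodes_def by auto
    have i: "i \<in> {1..q}" and b: "b \<in> {1..q}" using ip iv unfolding i_def b_def by auto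
    have J: "prob (E2 ?p v i b) = J i b" using edgeJ[OF pv True] pp by blast
    have A: "prob {\<phi> \<in> space \<mu>. \<phi> ?p = i} = alpha i" using marg_even[OF pv True] .
    have aw: "alpha i = ff i * zsum q E w (int i)" using alpha_w[OF i] w_plus i by simp
    have ffp: "ff i > 0" using ff_pos[OF i] .
    show ?thesis
    proof (cases "E i b")
      case True
      have "J i b / alpha i = gg b / zsum q E w (int i)"
        using J_rank1[OF i b] True aw ffp by simp
      then show ?thesis unfolding c2 c1 using True zp zv J A dadj_pos_neg[of i b] i b w_minus[of b]
        unfolding i_def b_def by simp
    next
      case False
      then show ?thesis unfolding c2 c1 using zp zv J A dadj_pos_neg[of i b] J_rank1[OF i b]
        unfolding i_def b_def by simp
    qed
  next
    case False
    define b where "b = \<eta> ?p"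
    define i where "i = \<eta> v"
    have ev: "even (tdist x v)" using False pp[THEN conjunct2] by presburger
    have zp: "\<zeta> ?p = - int b" using gp False unfolding good_def b_def \<eta>_def double_nodes_def by auto
    have zv: "\<zeta> v = int i" using gv ev unfolding good_def i_def \<eta>_def by auto
    have i: "i \<in> {1..q}" and b: "b \<in> {1..q}" using ip iv unfolding i_def b_def by auto
    have vp: "tree_adj r v ?p" using pp tree_adj_sym by blast
    have J: "prob (E2 ?p v b i) = J i b" using edgeJ[OF vv ev vp] E2_swap by metis
    have B: "prob {\<phi> \<in> space \<mu>. \<phi> ?p = b} = beta b" using marg_odd[OF pv False] .
    have bw: "beta b = gg b * zsum q E w (- int b)" using beta_w[OF b] w_minus b by simp
    have ggp: "gg b > 0" using gg_pos[OF b] .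
    show ?thesis
    proof (cases "E i b")
      case True
      have "J i b / beta b = ff i / zsum q E w (- int b)"
        using J_rank1[OF i b] True bw ggp by simp
      then show ?thesis unfolding c2 c1 using True zp zv J B dadj_neg_pos[of b i] i b w_plus[of i]
        unfolding i_def b_def by simp
    next
      case False
      then show ?thesis unfolding c2 c1 using zp zv J B dadj_neg_pos[of b i] J_rank1[OF i b]
        unfolding i_def b_def by simp
    qed
  qed
qed

lemma brw_eq:
  "measure \<nu> {\<psi> \<in> space \<nu>. \<forall>v\<in>ball r x n. \<psi> v = \<zeta> v} = brw_prob r q E w x n \<zeta>"
proof (cases "\<forall>v\<in>ball r x n. good n \<zeta> v")
  case True
  define \<eta> where "\<eta> = (\<lambda>v. nat \<bar>\<zeta> v\<bar>)"
  have set: "{\<phi> \<in> space \<mu>. \<forall>v\<in>ball r x n. (if even (tdist x v) then int (\<phi> v) else - int (\<phi> v)) = \<zeta> v}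
      = cyl (ball r x n) \<eta>"
    unfolding cyl_def \<eta>_def using sv_iff True by blast
  have MF: "prob (cyl (ball r x n) \<eta>) = prob (cyl {x} \<eta>) *
      (\<Prod>v\<in>ball r x n - {x}. prob (cyl {tparent r x v, v} \<eta>) / prob (cyl {tparent r x v} \<eta>))"
    by (rule markov_formula[OF ball_finite ball_sub ball_x[OF xv] ball_pc])
  have gx: "good n \<zeta> x" using True ball_x[OF xv] by blast
  have zx: "\<zeta> x = int (\<eta> x)" and ix: "\<eta> x \<in> {1..q}"
    using gx good_nat[OF gx] unfolding good_def \<eta>_def by auto
  have root: "root_dist q E w (\<zeta> x) = prob (cyl {x} \<eta>)"
    unfolding zx cyl1 using root_dist_eq[OF ix] alpha_x by simp
  have prods: "(\<Prod>v\<in>ball r x n - {x}. (if double_adj q E (\<zeta> (tparent r x v)) (\<zeta> v)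
         then w (\<zeta> v) / zsum q E w (\<zeta> (tparent r x v)) else 0))
      = (\<Prod>v\<in>ball r x n - {x}. prob (cyl {tparent r x v, v} \<eta>) / prob (cyl {tparent r x v} \<eta>))"
  proof (rule prod.cong[OF refl])
    fix v assume v: "v \<in> ball r x n - {x}"
    have "tparent r x v \<in> ball r x n" using ball_parent[OF xv] v by blast
    then have "good n \<zeta> (tparent r x v)" using True by blast
    moreover have "good n \<zeta> v" using True v by blast
    ultimately show "(if double_adj q E (\<zeta> (tparent r x v)) (\<zeta> v) then w (\<zeta> v) / zsum q E w (\<zeta> (tparent r x v)) else 0)
      = prob (cyl {tparent r x v, v} \<eta>) / prob (cyl {tparent r x v} \<eta>)"
      using factor_eq[of v n \<zeta>] v unfolding \<eta>_def by blast
  qed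
  show ?thesis unfolding nu_cyl set brw_prob_def MF root prods ..
next
  case False
  then obtain v0 where v0: "v0 \<in> ball r x n" "\<not> good n \<zeta> v0" by blast
  have lhs: "measure \<nu> {\<psi> \<in> space \<nu>. \<forall>v\<in>ball r x n. \<psi> v = \<zeta> v} = 0"
  proof -
    have v0v: "v0 \<in> tree_verts r" using v0 ball_sub by blast
    have "prob {\<phi> \<in> space \<mu>. \<forall>v\<in>ball r x n. (if even (tdist x v) then int (\<phi> v) else - int (\<phi> v)) = \<zeta> v}
        \<le> prob {\<phi> \<in> space \<mu>. \<phi> v0 \<notin> {1..q}}"
    proof (rule finite_measure_mono)
      show "{\<phi> \<in> space \<mu>. \<forall>v\<in>ball r x n. (if even (tdist x v) then int (\<phi> v) else - int (\<phi> v)) = \<zeta> v}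
          \<subseteq> {\<phi> \<in> space \<mu>. \<phi> v0 \<notin> {1..q}}"
        using bad_val[OF v0(2)] v0(1) by blast
      show "{\<phi> \<in> space \<mu>. \<phi> v0 \<notin> {1..q}} \<in> sets \<mu>" by (rule pt_sets[OF v0v])
    qed
    also have "\<dots> = 0" by (rule null_bad[OF v0v])
    finally show ?thesis unfolding nu_cyl using measure_nonneg[of \<mu>] by (simp add: antisym)
  qed
  obtain v where v: "v \<in> ball r x n \<and> \<not> good n \<zeta> v"
    and vmin: "\<forall>u. u \<in> ball r x n \<and> \<not> good n \<zeta> u \<longrightarrow> tdist x v \<le> tdist x u"
    using ex_has_least_nat[of "\<lambda>u. u \<in> ball r x n \<and> \<not> good n \<zeta> u" v0 "tdist x"] v0 by blast
  have rhs: "brw_prob r q E w x n \<zeta> = 0"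
  proof (cases "v = x")
    case True
    have nx: "\<zeta> x \<notin> {1..int q}" using v True unfolding good_def double_nodes_def by auto
    have rd: "root_dist q E w (\<zeta> x) = 0" unfolding root_dist_def by (rule if_not_P[OF nx])
    show ?thesis unfolding brw_prob_def rd by simp
  next
    case False
    have vv: "v \<in> tree_verts r" using v ball_sub by blast
    have pp: "tree_adj r (tparent r x v) v \<and> tdist x (tparent r x v) + 1 = tdist x v"
      using tparent_props[OF xv vv False] .
    have pb: "tparent r x v \<in> ball r x n" using ball_parent[OF xv] v False by blast
    have gp: "good n \<zeta> (tparent r x v)" using vmin pb pp by fastforce
    have "\<not> double_adj q E (\<zeta> (tparent r x v)) (\<zeta> v)"
    proof
      assume d: "double_adj q E (\<zeta> (tparent r x v)) (\<zeta> v)"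
      then have dv: "\<zeta> v \<in> double_nodes q" and neg: "\<zeta> (tparent r x v) * \<zeta> v < 0"
        unfolding double_adj_def by auto
      have par: "even (tdist x (tparent r x v)) \<longleftrightarrow> \<not> even (tdist x v)" using pp[THEN conjunct2] by presburger
      have "0 < \<zeta> v \<longleftrightarrow> \<not> 0 < \<zeta> (tparent r x v)" using neg by (auto simp: mult_less_0_iff)
      then have "good n \<zeta> v" using gp dv par unfolding good_def by blast
      then show False using v by blast
    qed
    then have "(\<Prod>u\<in>ball r x n - {x}. (if double_adj q E (\<zeta> (tparent r x u)) (\<zeta> u)
         then w (\<zeta> u) / zsum q E w (\<zeta> (tparent r x u)) else 0)) = 0"
      using v False by (intro prod_zero) (auto simp: ball_finite)
    then show ?thesis unfolding brw_prob_def by simp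
  qed
  show ?thesis using lhs rhs by simp
qed

lemma main: "\<exists>w \<nu>. (\<forall>i\<in>double_nodes q. w i > 0) \<and> is_brw_law r q E w x \<nu> \<and>
           \<mu> = distr \<nu> (cfgM r) (abs_cfg r)"
proof (intro exI conjI)
  show "\<forall>i\<in>double_nodes q. w i > 0" using w_pos by blast
  show "is_brw_law r q E w x \<nu>" unfolding is_brw_law_def using nu_prob nu_sets brw_eq by blast
  show "\<mu> = distr \<nu> (cfgM r) (abs_cfg r)" by (rule mu_eq)
qed

end

theorem theorem9p1:
  fixes q r :: nat and E :: "nat \<Rightarrow> nat \<Rightarrow> bool" and x :: "nat list"
    and lam :: "nat \<Rightarrow> real" and \<mu> :: "(nat list \<Rightarrow> nat) measure"
  assumes "constraint_graph q E"
    and "graph_connected q E"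
    and "\<not> graph_bipartite q E"
    and "r \<ge> 1"
    and "x \<in> tree_verts r"
    and "\<forall>i\<in>{1..q}. lam i > 0"
    and "gibbs r q E lam \<mu>"
    and "simple_gibbs r \<mu>"
    and "semi_invariant r x \<mu>"
  shows "\<exists>w \<nu>. (\<forall>i\<in>double_nodes q. w i > 0) \<and> is_brw_law r q E w x \<nu> \<and>
           \<mu> = distr \<nu> (cfgM r) (abs_cfg r)"
proof -
  interpret S: setting q r E x lam \<mu>
    by (rule setting.intro) (fact assms)+
  show ?thesis by (rule S.main)
qed

end
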